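(* The contravariant functors $\mathrm{ClpUp}$ and $\mathrm{Pf}$ establish a dual equivalence $\mathsf{CHA} \equiv^{op} \mathsf{CES}$ between the category of conditional Heyting algebras and the category of conditional Esakia spaces.
   Context: A conditional Heyting algebra is a Heyting algebra $(A,\top,\bot,\wedge,\vee,\to)$ with a binary operator $\mathrel{\Box\!\!\!\rightarrow}$ satisfying $a \mathrel{\Box\!\!\!\rightarrow} (b\wedge c) = (a\mathrel{\Box\!\!\!\rightarrow} b)\wedge(a\mathrel{\Box\!\!\!\rightarrow} c)$ and $a\mathrel{\Box\!\!\!\rightarrow}\top=\top$; morphisms ($\mathsf{CHA}$) are Heyting homomorphisms preserving $\mathrel{\Box\!\!\!\rightarrow}$. An Esakia space is a nonempty poset $(X,\leq)$ with a compact topology $\tau$ such that $x\not\leq y$ implies some clopen upset contains $x$ but not $y$, and ${\downarrow}a$ is clopen for each clopen $a$. A conditional Esakia space is an Esakia space $(X,\leq,\tau)$ with relations $\mathcal{R}=\{R_a \mid a \text{ a clopen upset}\}$ such that: $a \Rightarrow_c b := \{x \mid R_a[x]\subseteq b\}$ is clopen for all clopen upsets $a,b$; $(\leq\circ R_a\circ\leq)=R_a$; and $R_a[x]$ is closed for all $x$. Morphisms ($\mathsf{CES}$) are continuous bounded morphisms $f$ (order-preserving, and $f(x)\leq' z'$ implies $z'=f(z)$ for some $z\geq x$) such that for all clopen upsets $a'$: $xR_{f^{-1}(a')}y$ implies $f(x)R_{a'}f(y)$, and $f(x)R_{a'}z'$ implies there is $z$ with $xR_{f^{-1}(a')}z$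 and $f(z)\leq' z'$. The functor $\mathrm{ClpUp}$ sends a conditional Esakia space to the conditional Heyting algebra of its clopen upsets with $X,\emptyset,\cap,\cup$, implication $a\Rightarrow b = X\setminus{\downarrow}(a\setminus b)$ and conditional $\Rightarrow_c$ above, and a morphism $f$ to $f^{-1}$. The functor $\mathrm{Pf}$ sends a conditional Heyting algebra $A$ to its set of prime filters ordered by inclusion, with topology generated by the sets $\theta(a)=\{p \mid a\in p\}$ and their complements, and relations $x R_{\theta(a)} y$ iff $\{b\in A\mid a\mathrel{\Box\!\!\!\rightarrow} b\in x\}\subseteq y$; it sends a homomorphism $h$ to $h^{-1}$. *)

theory Defs
  imports "HOL-Analysis.Analysis"
begin

record 'a cha_sig =
  hcarrier :: "'a set"
  htop :: 'a
  hbot :: 'a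
  hmeet :: "'a \<Rightarrow> 'a \<Rightarrow> 'a"
  hjoin :: "'a \<Rightarrow> 'a \<Rightarrow> 'a"
  himp :: "'a \<Rightarrow> 'a \<Rightarrow> 'a"
  hcond :: "'a \<Rightarrow> 'a \<Rightarrow> 'a"

definition hle :: "('a, 'm) cha_sig_scheme \<Rightarrow> 'a \<Rightarrow> 'a \<Rightarrow> bool" where
  "hle A a b \<longleftrightarrow> hmeet A a b = a"

text \<open>Heyting algebra: a bounded lattice (given by its meet/join axioms) with relative
  pseudocomplement. We follow the convention top ~= bot.\<close>
definition heyting_algebra :: "('a, 'm) cha_sig_scheme \<Rightarrow> bool" where
  "heyting_algebra A \<longleftrightarrow>
     htop A \<in> hcarrier A \<and> hbot A \<in> hcarrier A \<and> htop A \<noteq> hbot A \<and>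
     (\<forall>a\<in>hcarrier A. \<forall>b\<in>hcarrier A.
        hmeet A a b \<in> hcarrier A \<and> hjoin A a b \<in> hcarrier A \<and> himp A a b \<in> hcarrier A) \<and>
     (\<forall>a\<in>hcarrier A. \<forall>b\<in>hcarrier A.
        hmeet A a b = hmeet A b a \<and> hjoin A a b = hjoin A b a \<and>
        hmeet A a (hjoin A a b) = a \<and> hjoin A a (hmeet A a b) = a) \<and>
     (\<forall>a\<in>hcarrier A. \<forall>b\<in>hcarrier A. \<forall>c\<in>hcarrier A.
        hmeet A a (hmeet A b c) = hmeet A (hmeet A a b) c \<and>
        hjoin A a (hjoin A b c) = hjoin A (hjoin A a b) c) \<and>
     (\<forall>a\<in>hcarrier A. hle A (hbot A) a \<and> hle A a (htop A)) \<and>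
     (\<forall>a\<in>hcarrier A. \<forall>b\<in>hcarrier A. \<forall>c\<in>hcarrier A.
        hle A c (himp A a b) \<longleftrightarrow> hle A (hmeet A c a) b)"

definition cha :: "('a, 'm) cha_sig_scheme \<Rightarrow> bool" where
  "cha A \<longleftrightarrow> heyting_algebra A \<and>
     (\<forall>a\<in>hcarrier A. \<forall>b\<in>hcarrier A. hcond A a b \<in> hcarrier A) \<and>
     (\<forall>a\<in>hcarrier A. \<forall>b\<in>hcarrier A. \<forall>c\<in>hcarrier A.
        hcond A a (hmeet A b c) = hmeet A (hcond A a b) (hcond A a c)) \<and>
     (\<forall>a\<in>hcarrier A. hcond A a (htop A) = htop A)"

definition cha_hom :: "('a, 'm) cha_sig_scheme \<Rightarrow> ('b, 'n) cha_sig_scheme \<Rightarrow> ('a \<Rightarrow> 'b) \<Rightarrow> bool" where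
  "cha_hom A B h \<longleftrightarrow> h \<in> hcarrier A \<rightarrow> hcarrier B \<and>
     h (htop A) = htop B \<and> h (hbot A) = hbot B \<and>
     (\<forall>a\<in>hcarrier A. \<forall>b\<in>hcarrier A.
        h (hmeet A a b) = hmeet B (h a) (h b) \<and> h (hjoin A a b) = hjoin B (h a) (h b) \<and>
        h (himp A a b) = himp B (h a) (h b) \<and> h (hcond A a b) = hcond B (h a) (h b))"

definition cha_iso :: "('a, 'm) cha_sig_scheme \<Rightarrow> ('b, 'n) cha_sig_scheme \<Rightarrow> ('a \<Rightarrow> 'b) \<Rightarrow> bool" where
  "cha_iso A B h \<longleftrightarrow> cha_hom A B h \<and>
     (\<exists>g. cha_hom B A g \<and> (\<forall>a\<in>hcarrier A. g (h a) = a) \<and> (\<forall>b\<in>hcarrier B. h (g b) = b))"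

text \<open>rel X a is the relation R_a; it is only meaningful for clopen upsets a.\<close>
record 'x ces_sig =
  pts :: "'x set"
  leq :: "'x \<Rightarrow> 'x \<Rightarrow> bool"
  topo :: "'x topology"
  rel :: "'x set \<Rightarrow> 'x \<Rightarrow> 'x \<Rightarrow> bool"

definition is_upset :: "('x, 'm) ces_sig_scheme \<Rightarrow> 'x set \<Rightarrow> bool" where
  "is_upset X U \<longleftrightarrow> U \<subseteq> pts X \<and> (\<forall>x\<in>U. \<forall>y\<in>pts X. leq X x y \<longrightarrow> y \<in> U)"

definition is_clopen :: "('x, 'm) ces_sig_scheme \<Rightarrow> 'x set \<Rightarrow> bool" where
  "is_clopen X U \<longleftrightarrow> openin (topo X) U \<and> closedin (topo X) U"

definition down :: "('x, 'm) ces_sig_scheme \<Rightarrow> 'x set \<Rightarrow> 'x set" where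
  "down X U = {y \<in> pts X. \<exists>x\<in>U. leq X y x}"

definition clopen_upsets :: "('x, 'm) ces_sig_scheme \<Rightarrow> 'x set set" where
  "clopen_upsets X = {U. is_clopen X U \<and> is_upset X U}"

definition ccond :: "('x, 'm) ces_sig_scheme \<Rightarrow> 'x set \<Rightarrow> 'x set \<Rightarrow> 'x set" where
  "ccond X a b = {x \<in> pts X. {y. rel X a x y} \<subseteq> b}"

definition esakia_space :: "('x, 'm) ces_sig_scheme \<Rightarrow> bool" where
  "esakia_space X \<longleftrightarrow>
     topspace (topo X) = pts X \<and> pts X \<noteq> {} \<and>
     (\<forall>x\<in>pts X. leq X x x) \<and>
     (\<forall>x\<in>pts X. \<forall>y\<in>pts X. leq X x y \<and> leq X y x \<longrightarrow> x = y) \<and>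
     (\<forall>x\<in>pts X. \<forall>y\<in>pts X. \<forall>z\<in>pts X. leq X x y \<and> leq X y z \<longrightarrow> leq X x z) \<and>
     compact_space (topo X) \<and>
     (\<forall>x\<in>pts X. \<forall>y\<in>pts X. \<not> leq X x y \<longrightarrow> (\<exists>U\<in>clopen_upsets X. x \<in> U \<and> y \<notin> U)) \<and>
     (\<forall>U. is_clopen X U \<longrightarrow> is_clopen X (down X U))"

definition ces :: "('x, 'm) ces_sig_scheme \<Rightarrow> bool" where
  "ces X \<longleftrightarrow> esakia_space X \<and>
     (\<forall>a\<in>clopen_upsets X.
        (\<forall>x y. rel X a x y \<longrightarrow> x \<in> pts X \<and> y \<in> pts X) \<and>
        (\<forall>b\<in>clopen_upsets X. is_clopen X (ccond X a b)) \<and>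
        (\<forall>x\<in>pts X. \<forall>y\<in>pts X.
           (\<exists>x'\<in>pts X. \<exists>y'\<in>pts X. leq X x x' \<and> rel X a x' y' \<and> leq X y' y) \<longleftrightarrow> rel X a x y) \<and>
        (\<forall>x\<in>pts X. closedin (topo X) {y. rel X a x y}))"

definition ces_morph :: "('x, 'm) ces_sig_scheme \<Rightarrow> ('y, 'n) ces_sig_scheme \<Rightarrow> ('x \<Rightarrow> 'y) \<Rightarrow> bool" where
  "ces_morph X Y f \<longleftrightarrow>
     f \<in> pts X \<rightarrow> pts Y \<and> continuous_map (topo X) (topo Y) f \<and>
     (\<forall>x\<in>pts X. \<forall>y\<in>pts X. leq X x y \<longrightarrow> leq Y (f x) (f y)) \<and>
     (\<forall>x\<in>pts X. \<forall>z'\<in>pts Y. leq Y (f x) z' \<longrightarrow> (\<exists>z\<in>pts X. leq X x z \<and> f z = z')) \<and>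
     (\<forall>a'\<in>clopen_upsets Y.
        (\<forall>x\<in>pts X. \<forall>y\<in>pts X. rel X {u \<in> pts X. f u \<in> a'} x y \<longrightarrow> rel Y a' (f x) (f y)) \<and>
        (\<forall>x\<in>pts X. \<forall>z'\<in>pts Y. rel Y a' (f x) z' \<longrightarrow>
           (\<exists>z\<in>pts X. rel X {u \<in> pts X. f u \<in> a'} x z \<and> leq Y (f z) z')))"

definition ces_iso :: "('x, 'm) ces_sig_scheme \<Rightarrow> ('y, 'n) ces_sig_scheme \<Rightarrow> ('x \<Rightarrow> 'y) \<Rightarrow> bool" where
  "ces_iso X Y f \<longleftrightarrow> ces_morph X Y f \<and>
     (\<exists>g. ces_morph Y X g \<and> (\<forall>x\<in>pts X. g (f x) = x) \<and> (\<forall>y\<in>pts Y. f (g y) = y))"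

definition clpup :: "'x ces_sig \<Rightarrow> 'x set cha_sig" where
  "clpup X = \<lparr> hcarrier = clopen_upsets X, htop = pts X, hbot = {},
     hmeet = (\<inter>), hjoin = (\<union>), himp = (\<lambda>a b. pts X - down X (a - b)),
     hcond = ccond X \<rparr>"

definition clpup_mor :: "'x ces_sig \<Rightarrow> ('x \<Rightarrow> 'y) \<Rightarrow> 'y set \<Rightarrow> 'x set" where
  "clpup_mor X f a' = {x \<in> pts X. f x \<in> a'}"

definition prime_filter :: "'a cha_sig \<Rightarrow> 'a set \<Rightarrow> bool" where
  "prime_filter A F \<longleftrightarrow> F \<subseteq> hcarrier A \<and> htop A \<in> F \<and> hbot A \<notin> F \<and>
     (\<forall>a\<in>F. \<forall>b\<in>hcarrier A. hle A a b \<longrightarrow> b \<in> F) \<and>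
     (\<forall>a\<in>F. \<forall>b\<in>F. hmeet A a b \<in> F) \<and>
     (\<forall>a\<in>hcarrier A. \<forall>b\<in>hcarrier A. hjoin A a b \<in> F \<longrightarrow> a \<in> F \<or> b \<in> F)"

definition theta :: "'a cha_sig \<Rightarrow> 'a \<Rightarrow> 'a set set" where
  "theta A a = {p. prime_filter A p \<and> a \<in> p}"

definition pf :: "'a cha_sig \<Rightarrow> 'a set ces_sig" where
  "pf A = \<lparr> pts = {p. prime_filter A p}, leq = (\<subseteq>),
     topo = topology_generated_by
              ((theta A ` hcarrier A) \<union> ((\<lambda>a. {p. prime_filter A p} - theta A a) ` hcarrier A)),
     rel = (\<lambda>S x y. prime_filter A x \<and> prime_filter A y \<and>
              (\<exists>a\<in>hcarrier A. S = theta A a \<and> {b \<in> hcarrier A. hcond A a b \<in> x} \<subseteq> y)) \<rparr>"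

definition pf_mor :: "'a cha_sig \<Rightarrow> ('a \<Rightarrow> 'b) \<Rightarrow> 'b set \<Rightarrow> 'a set" where
  "pf_mor A h p = {a \<in> hcarrier A. h a \<in> p}"

definition eps :: "'x ces_sig \<Rightarrow> 'x \<Rightarrow> 'x set set" where
  "eps X x = {a \<in> clopen_upsets X. x \<in> a}"

end

theory Submission
  imports Defs
begin

locale HA =
  fixes A :: "'a cha_sig"
  assumes ha: "heyting_algebra A"
begin

abbreviation "car \<equiv> hcarrier A"
abbreviation "mt \<equiv> hmeet A"
abbreviation "jn \<equiv> hjoin A"
abbreviation "im \<equiv> himp A"
abbreviation "tp \<equiv> htop A"
abbreviation "bt \<equiv> hbot A"
abbreviation "le \<equiv> hle A"

lemma ha_conj: "htop A \<in> hcarrier A \<and> hbot A \<in> hcarrier A \<and> htop A \<noteq> hbot A \<and>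
     (\<forall>a\<in>hcarrier A. \<forall>b\<in>hcarrier A.
        hmeet A a b \<in> hcarrier A \<and> hjoin A a b \<in> hcarrier A \<and> himp A a b \<in> hcarrier A) \<and>
     (\<forall>a\<in>hcarrier A. \<forall>b\<in>hcarrier A.
        hmeet A a b = hmeet A b a \<and> hjoin A a b = hjoin A b a \<and>
        hmeet A a (hjoin A a b) = a \<and> hjoin A a (hmeet A a b) = a) \<and>
     (\<forall>a\<in>hcarrier A. \<forall>b\<in>hcarrier A. \<forall>c\<in>hcarrier A.
        hmeet A a (hmeet A b c) = hmeet A (hmeet A a b) c \<and>
        hjoin A a (hjoin A b c) = hjoin A (hjoin A a b) c) \<and>
     (\<forall>a\<in>hcarrier A. hle A (hbot A) a \<and> hle A a (htop A)) \<and>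
     (\<forall>a\<in>hcarrier A. \<forall>b\<in>hcarrier A. \<forall>c\<in>hcarrier A.
        hle A c (himp A a b) \<longleftrightarrow> hle A (hmeet A c a) b)"
  using ha unfolding heyting_algebra_def by (rule HOL.subst[OF refl])

lemmas hc = ha_conj[THEN conjunct1] ha_conj[THEN conjunct2, THEN conjunct1]
  ha_conj[THEN conjunct2, THEN conjunct2, THEN conjunct1]
  ha_conj[THEN conjunct2, THEN conjunct2, THEN conjunct2, THEN conjunct1]
  ha_conj[THEN conjunct2, THEN conjunct2, THEN conjunct2, THEN conjunct2, THEN conjunct1]
  ha_conj[THEN conjunct2, THEN conjunct2, THEN conjunct2, THEN conjunct2, THEN conjunct2, THEN conjunct1]
  ha_conj[THEN conjunct2, THEN conjunct2, THEN conjunct2, THEN conjunct2, THEN conjunct2, THEN conjunct2, THEN conjunct1]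
  ha_conj[THEN conjunct2, THEN conjunct2, THEN conjunct2, THEN conjunct2, THEN conjunct2, THEN conjunct2, THEN conjunct2]

lemma tp_in[simp]: "tp \<in> car" and bt_in[simp]: "bt \<in> car" and tp_ne_bt: "tp \<noteq> bt"
  using hc(1-3) by auto

lemma mt_in[simp]: "a \<in> car \<Longrightarrow> b \<in> car \<Longrightarrow> mt a b \<in> car"
  and jn_in[simp]: "a \<in> car \<Longrightarrow> b \<in> car \<Longrightarrow> jn a b \<in> car"
  and im_in[simp]: "a \<in> car \<Longrightarrow> b \<in> car \<Longrightarrow> im a b \<in> car"
  using hc(4) by auto

lemma mt_comm: "a \<in> car \<Longrightarrow> b \<in> car \<Longrightarrow> mt a b = mt b a"
  and jn_comm: "a \<in> car \<Longrightarrow> b \<in> car \<Longrightarrow> jn a b = jn b a"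
  and absorb1: "a \<in> car \<Longrightarrow> b \<in> car \<Longrightarrow> mt a (jn a b) = a"
  and absorb2: "a \<in> car \<Longrightarrow> b \<in> car \<Longrightarrow> jn a (mt a b) = a"
  using hc(5) by auto

lemma mt_assoc: "a \<in> car \<Longrightarrow> b \<in> car \<Longrightarrow> c \<in> car \<Longrightarrow> mt a (mt b c) = mt (mt a b) c"
  and jn_assoc: "a \<in> car \<Longrightarrow> b \<in> car \<Longrightarrow> c \<in> car \<Longrightarrow> jn a (jn b c) = jn (jn a b) c"
  using hc(6) by auto

lemma bt_le: "a \<in> car \<Longrightarrow> le bt a" and le_tp: "a \<in> car \<Longrightarrow> le a tp"
  using hc(7) by auto

lemma im_adj: "a \<in> car \<Longrightarrow> b \<in> car \<Longrightarrow> c \<in> car \<Longrightarrow> le c (im a b) \<longleftrightarrow> le (mt c a) b"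
  using hc(8) by blast

lemma le_def': "le a b \<longleftrightarrow> mt a b = a" by (simp add: hle_def)

lemma mt_idem: "a \<in> car \<Longrightarrow> mt a a = a"
proof -
  assume a: "a \<in> car"
  have "jn a (mt a a) = a" using a absorb2 by simp
  hence "mt a a = mt a (jn a (mt a a))" by simp
  also have "\<dots> = a" using a absorb1 by simp
  finally show ?thesis .
qed

lemma jn_idem: "a \<in> car \<Longrightarrow> jn a a = a"
proof -
  assume a: "a \<in> car"
  have "mt a (jn a a) = a" using a absorb1 by simp
  hence "jn a a = jn a (mt a (jn a a))" by simp
  also have "\<dots> = a" using a absorb2 by simp
  finally show ?thesis .
qed

lemma le_refl: "a \<in> car \<Longrightarrow> le a a"
  by (simp add: le_def' mt_idem)

lemma le_jn: "a \<in> car \<Longrightarrow> b \<in> car \<Longrightarrow> le a b \<longleftrightarrow> jn a b = b"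
proof -
  assume a: "a \<in> car" and b: "b \<in> car"
  show ?thesis
  proof
    assume "le a b" hence "mt a b = a" by (simp add: le_def')
    hence "jn a b = jn (mt b a) b" using a b mt_comm by simp
    also have "\<dots> = jn b (mt b a)" using a b jn_comm by simp
    also have "\<dots> = b" using a b absorb2 by simp
    finally show "jn a b = b" .
  next
    assume "jn a b = b"
    hence "mt a b = mt a (jn a b)" by simp
    also have "\<dots> = a" using a b absorb1 by simp
    finally show "le a b" by (simp add: le_def')
  qed
qed

lemma le_antisym: "a \<in> car \<Longrightarrow> b \<in> car \<Longrightarrow> le a b \<Longrightarrow> le b a \<Longrightarrow> a = b"
  unfolding le_def' using mt_comm by force

lemma le_trans: "a \<in> car \<Longrightarrow> b \<in> car \<Longrightarrow> c \<in> car \<Longrightarrow> le a b \<Longrightarrow> le b c \<Longrightarrow> le a c"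
proof -
  assume c: "a \<in> car" "b \<in> car" "c \<in> car" and ab: "le a b" and bc: "le b c"
  have "mt a c = mt (mt a b) c" using ab by (simp add: le_def')
  also have "\<dots> = mt a (mt b c)" using c mt_assoc by simp
  also have "\<dots> = a" using ab bc by (simp add: le_def')
  finally show ?thesis by (simp add: le_def')
qed

lemma mt_le1: "a \<in> car \<Longrightarrow> b \<in> car \<Longrightarrow> le (mt a b) a"
proof -
  assume c: "a \<in> car" "b \<in> car"
  have "mt (mt a b) a = mt a (mt a b)" using c mt_comm by simp
  also have "\<dots> = mt (mt a a) b" using c mt_assoc by simp
  also have "\<dots> = mt a b" using c mt_idem by simp
  finally show ?thesis by (simp add: le_def')
qed

lemma mt_le2: "a \<in> car \<Longrightarrow> b \<in> car \<Longrightarrow> le (mt a b) b"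
  using mt_comm mt_le1 by force

lemma le_mt_iff: "a \<in> car \<Longrightarrow> b \<in> car \<Longrightarrow> c \<in> car \<Longrightarrow> le c (mt a b) \<longleftrightarrow> le c a \<and> le c b"
proof -
  assume x: "a \<in> car" "b \<in> car" "c \<in> car"
  show ?thesis
  proof
    assume "le c (mt a b)"
    thus "le c a \<and> le c b" using x le_trans[of c "mt a b"] mt_le1 mt_le2 by simp
  next
    assume "le c a \<and> le c b"
    hence "mt c a = c" "mt c b = c" by (auto simp: le_def')
    hence "mt c (mt a b) = c" using x mt_assoc by metis
    thus "le c (mt a b)" by (simp add: le_def')
  qed
qed

lemma jn_ge1: "a \<in> car \<Longrightarrow> b \<in> car \<Longrightarrow> le a (jn a b)"
  by (simp add: absorb1 le_def')

lemma jn_ge2: "a \<in> car \<Longrightarrow> b \<in> car \<Longrightarrow> le b (jn a b)"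
  using jn_comm jn_ge1 by force

lemma jn_le_iff: "a \<in> car \<Longrightarrow> b \<in> car \<Longrightarrow> c \<in> car \<Longrightarrow> le (jn a b) c \<longleftrightarrow> le a c \<and> le b c"
proof -
  assume x: "a \<in> car" "b \<in> car" "c \<in> car"
  show ?thesis
  proof
    assume "le (jn a b) c"
    thus "le a c \<and> le b c" using x le_trans[of a "jn a b" c] le_trans[of b "jn a b" c] jn_ge1 jn_ge2 by simp
  next
    assume "le a c \<and> le b c"
    hence "jn a c = c" "jn b c = c" using x le_jn by auto
    hence "jn (jn a b) c = c" using x jn_assoc by metis
    thus "le (jn a b) c" using x le_jn by simp
  qed
qed

lemma mt_mono: "a \<in> car \<Longrightarrow> b \<in> car \<Longrightarrow> c \<in> car \<Longrightarrow> d \<in> car \<Longrightarrow> le a c \<Longrightarrow> le b d \<Longrightarrow> le (mt a b) (mt c d)"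
  by (simp add: le_mt_iff) (meson le_trans mt_in mt_le1 mt_le2)

lemma jn_mono: "a \<in> car \<Longrightarrow> b \<in> car \<Longrightarrow> c \<in> car \<Longrightarrow> d \<in> car \<Longrightarrow> le a c \<Longrightarrow> le b d \<Longrightarrow> le (jn a b) (jn c d)"
  by (simp add: jn_le_iff) (meson le_trans jn_in jn_ge1 jn_ge2)

lemma mp_le: "a \<in> car \<Longrightarrow> b \<in> car \<Longrightarrow> le (mt a (im a b)) b"
proof -
  assume x: "a \<in> car" "b \<in> car"
  have "le (mt (im a b) a) b" using x im_adj[of a b "im a b"] le_refl by simp
  thus ?thesis using x mt_comm by simp
qed

lemma distrib_le: "a \<in> car \<Longrightarrow> b \<in> car \<Longrightarrow> c \<in> car \<Longrightarrow> le (mt a (jn b c)) (jn (mt a b) (mt a c))"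
proof -
  assume a: "a \<in> car" and b: "b \<in> car" and c: "c \<in> car"
  let ?X = "jn (mt a b) (mt a c)"
  have X: "?X \<in> car" using a b c by simp
  have "le (mt b a) ?X" using a b c by (metis jn_ge1 mt_comm mt_in)
  hence 1: "le b (im a ?X)" using a b X im_adj by blast
  have "le (mt c a) ?X" using a b c by (metis jn_ge2 mt_comm mt_in)
  hence 2: "le c (im a ?X)" using a c X im_adj by blast
  have "le (jn b c) (im a ?X)" using 1 2 a b c X by (simp add: jn_le_iff)
  hence "le (mt (jn b c) a) ?X" using a b c X im_adj by simp
  thus ?thesis using a b c by (simp add: mt_comm)
qed

definition filt :: "'a set \<Rightarrow> bool" where
  "filt F \<longleftrightarrow> F \<subseteq> car \<and> tp \<in> F \<and> (\<forall>a\<in>F. \<forall>b\<in>car. le a b \<longrightarrow> b \<in> F) \<and> (\<forall>a\<in>F. \<forall>b\<in>F. mt a b \<in> F)"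

definition idl :: "'a set \<Rightarrow> bool" where
  "idl I \<longleftrightarrow> I \<subseteq> car \<and> bt \<in> I \<and> (\<forall>a\<in>I. \<forall>b\<in>car. le b a \<longrightarrow> b \<in> I) \<and> (\<forall>a\<in>I. \<forall>b\<in>I. jn a b \<in> I)"

lemma filtD: assumes "filt F"
  shows "F \<subseteq> car" "tp \<in> F" "\<And>a b. a \<in> F \<Longrightarrow> b \<in> car \<Longrightarrow> le a b \<Longrightarrow> b \<in> F"
    "\<And>a b. a \<in> F \<Longrightarrow> b \<in> F \<Longrightarrow> mt a b \<in> F"
  using assms unfolding filt_def by blast+

lemma filtI: assumes "F \<subseteq> car" "tp \<in> F" "\<And>a b. a \<in> F \<Longrightarrow> b \<in> car \<Longrightarrow> le a b \<Longrightarrow> b \<in> F"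
    "\<And>a b. a \<in> F \<Longrightarrow> b \<in> F \<Longrightarrow> mt a b \<in> F"
  shows "filt F"
  using assms unfolding filt_def by blast

lemma idlD: assumes "idl I"
  shows "I \<subseteq> car" "bt \<in> I" "\<And>a b. a \<in> I \<Longrightarrow> b \<in> car \<Longrightarrow> le b a \<Longrightarrow> b \<in> I"
    "\<And>a b. a \<in> I \<Longrightarrow> b \<in> I \<Longrightarrow> jn a b \<in> I"
  using assms unfolding idl_def by blast+

lemma idlI: assumes "I \<subseteq> car" "bt \<in> I" "\<And>a b. a \<in> I \<Longrightarrow> b \<in> car \<Longrightarrow> le b a \<Longrightarrow> b \<in> I"
    "\<And>a b. a \<in> I \<Longrightarrow> b \<in> I \<Longrightarrow> jn a b \<in> I"
  shows "idl I"
  using assms unfolding idl_def by blast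

lemma gen_filt:
  assumes M: "filt M" and a: "a \<in> car"
  shows "filt {c \<in> car. \<exists>m\<in>M. le (mt m a) c}" (is "filt ?G")
proof (rule filtI)
  show "?G \<subseteq> car" by auto
  have "tp \<in> M" using filtD(2)[OF M] .
  moreover have "le (mt tp a) tp" using a by (simp add: le_tp)
  ultimately show "tp \<in> ?G" by auto
next
  fix x y assume x: "x \<in> ?G" and y: "y \<in> car" and xy: "le x y"
  then obtain m where m: "m \<in> M" "le (mt m a) x" and xc: "x \<in> car" by auto
  have "m \<in> car" using m(1) filtD(1)[OF M] by auto
  hence "le (mt m a) y" using le_trans[OF _ xc y m(2) xy] a by simp
  thus "y \<in> ?G" using m(1) y by auto
next
  fix x y assume x: "x \<in> ?G" and y: "y \<in> ?G"
  then obtain m1 m2 where m1: "m1 \<in> M" "le (mt m1 a) x" and m2: "m2 \<in> M" "le (mt m2 a) y" and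
    xy: "x \<in> car" "y \<in> car" by auto
  have mc: "m1 \<in> car" "m2 \<in> car" using m1 m2 filtD(1)[OF M] by auto
  have "le (mt (mt m1 m2) a) (mt m1 a)" using mc a by (intro mt_mono) (simp_all add: mt_le1 le_refl)
  hence 1: "le (mt (mt m1 m2) a) x" using le_trans[OF _ _ xy(1) _ m1(2)] mc a by simp
  have "le (mt (mt m1 m2) a) (mt m2 a)" using mc a by (intro mt_mono) (simp_all add: mt_le2 le_refl)
  hence 2: "le (mt (mt m1 m2) a) y" using le_trans[OF _ _ xy(2) _ m2(2)] mc a by simp
  have "le (mt (mt m1 m2) a) (mt x y)" using 1 2 mc a xy le_mt_iff by simp
  moreover have "mt m1 m2 \<in> M" using filtD(4)[OF M m1(1) m2(1)] .
  ultimately show "mt x y \<in> ?G" using xy by auto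
qed

lemma gen_filt_sub: "filt M \<Longrightarrow> a \<in> car \<Longrightarrow> M \<subseteq> {c \<in> car. \<exists>m\<in>M. le (mt m a) c}"
  using filtD(1) mt_le1 by blast

lemma gen_filt_in: "filt M \<Longrightarrow> a \<in> car \<Longrightarrow> a \<in> {c \<in> car. \<exists>m\<in>M. le (mt m a) c}"
  using filtD(2) mt_le2[of tp a] by auto

lemma pft:
  assumes F: "filt F" and I: "idl I" and disj: "F \<inter> I = {}"
  shows "\<exists>P. prime_filter A P \<and> F \<subseteq> P \<and> P \<inter> I = {}"
proof -
  define Fam where "Fam = {G. filt G \<and> F \<subseteq> G \<and> G \<inter> I = {}}"
  have "\<forall>Ch\<in>chains Fam. \<exists>U\<in>Fam. \<forall>X\<in>Ch. X \<subseteq> U"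
  proof
    fix Ch assume ch: "Ch \<in> chains Fam"
    show "\<exists>U\<in>Fam. \<forall>X\<in>Ch. X \<subseteq> U"
    proof (cases "Ch = {}")
      case True thus ?thesis using F disj unfolding Fam_def by auto
    next
      case False
      have sub: "\<And>X. X \<in> Ch \<Longrightarrow> filt X \<and> F \<subseteq> X \<and> X \<inter> I = {}" using ch by (auto simp: chains_def Fam_def)
      have chn: "\<forall>X\<in>Ch. \<forall>Y\<in>Ch. X \<subseteq> Y \<or> Y \<subseteq> X" using ch by (auto simp: chains_def chain_subset_def)
      have "filt (\<Union>Ch)"
      proof (rule filtI)
        show "\<Union>Ch \<subseteq> car" using sub filtD(1) by blast
        obtain X where "X \<in> Ch" using False by auto
        thus "tp \<in> \<Union>Ch" using sub filtD(2) by blast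
      next
        fix a b assume "a \<in> \<Union>Ch" "b \<in> car" "le a b" thus "b \<in> \<Union>Ch"
          using sub filtD(3) by blast
      next
        fix a b assume a: "a \<in> \<Union>Ch" and b: "b \<in> \<Union>Ch"
        then obtain X Y where X: "X \<in> Ch" "a \<in> X" and Y: "Y \<in> Ch" "b \<in> Y" by auto
        show "mt a b \<in> \<Union>Ch"
        proof (cases "X \<subseteq> Y")
          case True thus ?thesis using X Y sub filtD(4) by blast
        next
          case False hence "Y \<subseteq> X" using chn X Y by blast
          thus ?thesis using X Y sub filtD(4) by blast
        qed
      qed
      moreover have "F \<subseteq> \<Union>Ch" using sub False by auto
      moreover have "\<Union>Ch \<inter> I = {}" using sub by auto
      ultimately show ?thesis unfolding Fam_def by blast
    qed
  qed
  then obtain M where M: "M \<in> Fam" and max: "\<forall>X\<in>Fam. M \<subseteq> X \<longrightarrow> X = M"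
    using Zorn_Lemma2[of Fam] by blast
  have Mf: "filt M" and FM: "F \<subseteq> M" and MI: "M \<inter> I = {}" using M by (auto simp: Fam_def)
  have gen: "\<exists>m\<in>M. \<exists>i\<in>I. le (mt m a) i" if a: "a \<in> car" "a \<notin> M" for a
  proof (rule ccontr)
    assume nex: "\<not> ?thesis"
    define G where "G = {c \<in> car. \<exists>m\<in>M. le (mt m a) c}"
    have "filt G" unfolding G_def using gen_filt[OF Mf a(1)] .
    moreover have "M \<subseteq> G" unfolding G_def using gen_filt_sub[OF Mf a(1)] .
    moreover have "F \<subseteq> G" using FM \<open>M \<subseteq> G\<close> by auto
    moreover have "G \<inter> I = {}" using nex unfolding G_def by auto
    ultimately have "G \<in> Fam" "M \<subseteq> G" unfolding Fam_def by auto
    moreover have "a \<in> G" unfolding G_def using gen_filt_in[OF Mf a(1)] .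
    ultimately show False using max a by blast
  qed
  have "prime_filter A M"
    unfolding prime_filter_def
  proof (intro conjI ballI impI)
    show "M \<subseteq> car" "tp \<in> M" using filtD(1,2)[OF Mf] by auto
    show "bt \<notin> M" using MI idlD(2)[OF I] by auto
    show "\<And>a b. a \<in> M \<Longrightarrow> b \<in> car \<Longrightarrow> le a b \<Longrightarrow> b \<in> M" using filtD(3)[OF Mf] by blast
    show "\<And>a b. a \<in> M \<Longrightarrow> b \<in> M \<Longrightarrow> mt a b \<in> M" using filtD(4)[OF Mf] by blast
  next
    fix a b assume a: "a \<in> car" and b: "b \<in> car" and ab: "jn a b \<in> M"
    show "a \<in> M \<or> b \<in> M"
    proof (rule ccontr)
      assume "\<not> (a \<in> M \<or> b \<in> M)"
      then obtain m1 i1 m2 i2 where m1: "m1 \<in> M" "i1 \<in> I" "le (mt m1 a) i1"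
        and m2: "m2 \<in> M" "i2 \<in> I" "le (mt m2 b) i2" using gen a b by blast
      have c: "m1 \<in> car" "m2 \<in> car" "i1 \<in> car" "i2 \<in> car"
        using m1 m2 filtD(1)[OF Mf] idlD(1)[OF I] by auto
      let ?m = "mt (mt m1 m2) (jn a b)"
      have mM: "?m \<in> M" using filtD(4)[OF Mf filtD(4)[OF Mf m1(1) m2(1)] ab] .
      have 1: "le ?m (jn (mt (mt m1 m2) a) (mt (mt m1 m2) b))" using distrib_le c a b by simp
      have "le (mt (mt m1 m2) a) (mt m1 a)" using c a by (intro mt_mono) (simp_all add: mt_le1 le_refl)
      hence "le (mt (mt m1 m2) a) i1" using le_trans[OF _ _ _ _ m1(3)] c a by simp
      moreover have "le (mt (mt m1 m2) b) (mt m2 b)" using c b by (intro mt_mono) (simp_all add: mt_le2 le_refl)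
      hence "le (mt (mt m1 m2) b) i2" using le_trans[OF _ _ _ _ m2(3)] c b by simp
      ultimately have 2: "le (jn (mt (mt m1 m2) a) (mt (mt m1 m2) b)) (jn i1 i2)" using c a b by (simp add: jn_mono)
      have "le ?m (jn i1 i2)" using le_trans[OF _ _ _ 1 2] c a b by simp
      hence "jn i1 i2 \<in> M" using filtD(3)[OF Mf mM] c by simp
      moreover have "jn i1 i2 \<in> I" using idlD(4)[OF I m1(2) m2(2)] .
      ultimately show False using MI by blast
    qed
  qed
  thus ?thesis using FM MI by blast
qed

lemma principal_filt: "a \<in> car \<Longrightarrow> filt {c \<in> car. le a c}"
  unfolding filt_def by (auto intro: le_trans le_tp simp: le_mt_iff)

lemma principal_idl: "a \<in> car \<Longrightarrow> idl {c \<in> car. le c a}"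
  unfolding idl_def by (auto intro: le_trans bt_le simp: jn_le_iff)

lemma pf_sep: "filt F \<Longrightarrow> b \<in> car \<Longrightarrow> b \<notin> F \<Longrightarrow> \<exists>P. prime_filter A P \<and> F \<subseteq> P \<and> b \<notin> P"
proof -
  assume F: "filt F" and b: "b \<in> car" "b \<notin> F"
  have "F \<inter> {c \<in> car. le c b} = {}" using F b unfolding filt_def by auto
  then obtain P where "prime_filter A P" "F \<subseteq> P" "P \<inter> {c \<in> car. le c b} = {}"
    using pft[OF F principal_idl[OF b(1)]] by blast
  thus ?thesis using b le_refl by blast
qed

lemma pf_sep_le: "a \<in> car \<Longrightarrow> b \<in> car \<Longrightarrow> \<not> le a b \<Longrightarrow> \<exists>P. prime_filter A P \<and> a \<in> P \<and> b \<notin> P"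
  using pf_sep[OF principal_filt, of a b] le_refl by auto

lemma pf_exists: "\<exists>P. prime_filter A P"
proof -
  have "\<not> le tp bt" using tp_ne_bt bt_le le_antisym by auto
  thus ?thesis using pf_sep_le[of tp bt] by auto
qed

lemma pfD: assumes "prime_filter A P"
  shows "P \<subseteq> car" "tp \<in> P" "bt \<notin> P"
    "\<And>a b. a \<in> P \<Longrightarrow> b \<in> car \<Longrightarrow> le a b \<Longrightarrow> b \<in> P"
    "\<And>a b. a \<in> P \<Longrightarrow> b \<in> P \<Longrightarrow> mt a b \<in> P"
    "\<And>a b. a \<in> car \<Longrightarrow> b \<in> car \<Longrightarrow> jn a b \<in> P \<Longrightarrow> a \<in> P \<or> b \<in> P"
  using assms unfolding prime_filter_def by auto

lemma pf_mt_iff: "prime_filter A P \<Longrightarrow> a \<in> car \<Longrightarrow> b \<in> car \<Longrightarrow> mt a b \<in> P \<longleftrightarrow> a \<in> P \<and> b \<in> P"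
  by (meson mt_in mt_le1 mt_le2 pfD)

lemma pf_jn_iff: "prime_filter A P \<Longrightarrow> a \<in> car \<Longrightarrow> b \<in> car \<Longrightarrow> jn a b \<in> P \<longleftrightarrow> a \<in> P \<or> b \<in> P"
  by (meson jn_in jn_ge1 jn_ge2 pfD)

lemma pf_im: "prime_filter A P \<Longrightarrow> a \<in> car \<Longrightarrow> b \<in> car \<Longrightarrow> im a b \<in> P \<Longrightarrow> a \<in> P \<Longrightarrow> b \<in> P"
  by (metis im_in mp_le pfD(4,5))

lemma le_via_pf: "a \<in> car \<Longrightarrow> b \<in> car \<Longrightarrow> (\<And>P. prime_filter A P \<Longrightarrow> a \<in> P \<Longrightarrow> b \<in> P) \<Longrightarrow> le a b"
  using pf_sep_le by blast

lemma eq_via_pf: "a \<in> car \<Longrightarrow> b \<in> car \<Longrightarrow> (\<And>P. prime_filter A P \<Longrightarrow> a \<in> P \<longleftrightarrow> b \<in> P) \<Longrightarrow> a = b"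
  by (meson le_antisym le_via_pf)

end


lemma tgb_eq:
  "topology_generated_by S = topology (arbitrary union_of (finite intersection_of (\<lambda>x. x \<in> S) relative_to \<Union>S))"
proof -
  let ?R = "arbitrary union_of (finite intersection_of (\<lambda>x. x \<in> S) relative_to \<Union>S)"
  have istop: "istopology ?R" by (rule istopology_subbase)
  have "generate_topology_on S = ?R"
  proof (intro ext iffI)
    fix X assume "generate_topology_on S X"
    thus "?R X"
    proof induction
      case Empty
      then show ?case by (simp add: arbitrary_union_of_empty)
    next
      case (Int a b)
      then show ?case using istop unfolding istopology_def by blast
    next
      case (UN K)
      then show ?case using istop unfolding istopology_def by blast
    next
      case (Basis s)
      have "(finite intersection_of (\<lambda>x. x \<in> S) relative_to \<Union>S) s"
        unfolding relative_to_def
        using Basis by (intro exI[of _ s]) (auto intro: finite_intersection_of_inc)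
      then show ?case by (rule arbitrary_union_of_inc)
    qed
  next
    fix X assume "?R X"
    then obtain U where U: "U \<subseteq> Collect (finite intersection_of (\<lambda>x. x \<in> S) relative_to \<Union>S)" and X: "\<Union>U = X"
      unfolding union_of_def by auto
    have fin: "generate_topology_on S (\<Union>S \<inter> \<Inter>F)" if "finite F" "F \<subseteq> S" for F
      using that
    proof (induction F rule: finite_induct)
      case empty
      have "generate_topology_on S (\<Union>S)" by (rule generate_topology_on.UN) (rule generate_topology_on.Basis)
      then show ?case by simp
    next
      case (insert x F)
      have "\<Union>S \<inter> \<Inter>(insert x F) = x \<inter> (\<Union>S \<inter> \<Inter>F)" by auto
      then show ?case using insert by (metis generate_topology_on.Basis generate_topology_on.Int insert_subset)
    qed
    have "generate_topology_on S u" if "u \<in> U" for u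
    proof -
      obtain T where T: "(finite intersection_of (\<lambda>x. x \<in> S)) T" "\<Union>S \<inter> T = u"
        using U \<open>u \<in> U\<close> unfolding relative_to_def by auto
      then obtain F where "finite F" "F \<subseteq> S" "\<Inter>F = T" unfolding intersection_of_def by auto
      thus ?thesis using fin T by blast
    qed
    thus "generate_topology_on S X" using X generate_topology_on.UN by blast
  qed
  thus ?thesis by simp
qed

context HA
begin

definition "PF = {p. prime_filter A p}"
definition "Sb = theta A ` car \<union> (\<lambda>a. PF - theta A a) ` car"

abbreviation "th \<equiv> theta A"
abbreviation "PT \<equiv> topo (pf A)"

lemma pf_simps: "pts (pf A) = PF" "leq (pf A) = (\<subseteq>)" "PT = topology_generated_by Sb"
  by (simp_all add: pf_def PF_def Sb_def)

lemma th_mem: "P \<in> th a \<longleftrightarrow> prime_filter A P \<and> a \<in> P"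
  by (simp add: theta_def)

lemma PF_mem: "P \<in> PF \<longleftrightarrow> prime_filter A P" by (simp add: PF_def)

lemma th_sub: "th a \<subseteq> PF" by (auto simp: th_mem PF_mem)

lemma th_tp: "th tp = PF" using pfD(2) by (auto simp: th_mem PF_mem)

lemma th_bt: "th bt = {}" using pfD(3) by (auto simp: th_mem)

lemma th_mt: "a \<in> car \<Longrightarrow> b \<in> car \<Longrightarrow> th (mt a b) = th a \<inter> th b"
  using pf_mt_iff by (auto simp: th_mem)

lemma th_jn: "a \<in> car \<Longrightarrow> b \<in> car \<Longrightarrow> th (jn a b) = th a \<union> th b"
  using pf_jn_iff by (auto simp: th_mem)

lemma th_le_iff: "a \<in> car \<Longrightarrow> b \<in> car \<Longrightarrow> th a \<subseteq> th b \<longleftrightarrow> le a b"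
proof
  assume "a \<in> car" "b \<in> car" "th a \<subseteq> th b"
  thus "le a b" using le_via_pf[of a b] unfolding th_mem subset_iff by blast
next
  assume "a \<in> car" "b \<in> car" "le a b"
  thus "th a \<subseteq> th b" using pfD(4) by (auto simp: th_mem)
qed

lemma th_inj: "a \<in> car \<Longrightarrow> b \<in> car \<Longrightarrow> th a = th b \<Longrightarrow> a = b"
  by (metis order_refl th_le_iff le_antisym)

lemma topspace_PT: "topspace PT = PF"
proof -
  have "\<Union>Sb = PF"
  proof
    show "\<Union>Sb \<subseteq> PF" using th_sub unfolding Sb_def by auto
    show "PF \<subseteq> \<Union>Sb" using th_tp tp_in unfolding Sb_def by blast
  qed
  thus ?thesis by (simp add: pf_simps)
qed

lemma open_th: "a \<in> car \<Longrightarrow> openin PT (th a)"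
  unfolding pf_simps by (rule topology_generated_by_Basis) (auto simp: Sb_def)

lemma open_cth: "a \<in> car \<Longrightarrow> openin PT (PF - th a)"
  unfolding pf_simps by (rule topology_generated_by_Basis) (auto simp: Sb_def)

lemma closed_th: "a \<in> car \<Longrightarrow> closedin PT (th a)"
  unfolding closedin_def topspace_PT using open_cth th_sub by auto

lemma closed_cth: "a \<in> car \<Longrightarrow> closedin PT (PF - th a)"
proof -
  assume a: "a \<in> car"
  have "PF - (PF - th a) = th a" using th_sub by auto
  thus ?thesis unfolding closedin_def topspace_PT using open_th[OF a] by auto
qed

lemma fin_mt: "finite Y \<Longrightarrow> Y \<subseteq> car \<Longrightarrow> \<exists>m\<in>car. \<forall>P. prime_filter A P \<longrightarrow> (m \<in> P \<longleftrightarrow> Y \<subseteq> P)"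
proof (induction Y rule: finite_induct)
  case empty
  then show ?case using pfD(2) by (intro bexI[of _ tp]) auto
next
  case (insert y Y)
  then obtain m where m: "m \<in> car" "\<forall>P. prime_filter A P \<longrightarrow> (m \<in> P \<longleftrightarrow> Y \<subseteq> P)" by auto
  have y: "y \<in> car" using insert by auto
  show ?case using m y pf_mt_iff by (intro bexI[of _ "mt y m"]) auto
qed

lemma fin_jn: "finite X \<Longrightarrow> X \<subseteq> car \<Longrightarrow> \<exists>j\<in>car. \<forall>P. prime_filter A P \<longrightarrow> (j \<in> P \<longleftrightarrow> X \<inter> P \<noteq> {})"
proof (induction X rule: finite_induct)
  case empty
  then show ?case using pfD(3) by (intro bexI[of _ bt]) auto
next
  case (insert y Y)
  then obtain m where m: "m \<in> car" "\<forall>P. prime_filter A P \<longrightarrow> (m \<in> P \<longleftrightarrow> Y \<inter> P \<noteq> {})" by auto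
  have y: "y \<in> car" using insert by auto
  show ?case using m y pf_jn_iff by (intro bexI[of _ "jn y m"]) auto
qed

lemma compact_PT: "compact_space PT"
proof (rule Alexander_subbase_alt[where U = PF and \<B> = Sb])
  have USb: "\<Union>Sb = PF"
  proof
    show "\<Union>Sb \<subseteq> PF" using th_sub unfolding Sb_def by auto
    show "PF \<subseteq> \<Union>Sb" using th_tp tp_in unfolding Sb_def by blast
  qed
  thus "PF \<subseteq> \<Union>Sb" by simp
  show "topology (arbitrary union_of (finite intersection_of (\<lambda>x. x \<in> Sb) relative_to PF)) = PT"
    unfolding pf_simps tgb_eq USb ..
next
  fix Cv assume Cv: "Cv \<subseteq> Sb" and cov: "PF \<subseteq> \<Union>Cv"
  define Xs where "Xs = {a \<in> car. th a \<in> Cv}"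
  define Ys where "Ys = {b \<in> car. PF - th b \<in> Cv}"
  show "\<exists>C'. finite C' \<and> C' \<subseteq> Cv \<and> PF \<subseteq> \<Union>C'"
  proof (rule ccontr)
    assume nofin: "\<not> ?thesis"
    have nf: "\<not> PF \<subseteq> \<Union>C'" if "finite C'" "C' \<subseteq> Cv" for C'
      using nofin that by blast
    have noc: "\<exists>P. prime_filter A P \<and> Y0 \<subseteq> P \<and> X0 \<inter> P = {}"
      if "finite X0" "X0 \<subseteq> Xs" "finite Y0" "Y0 \<subseteq> Ys" for X0 Y0
    proof -
      let ?C = "th ` X0 \<union> (\<lambda>b. PF - th b) ` Y0"
      have "finite ?C" using that by simp
      moreover have "?C \<subseteq> Cv" using that unfolding Xs_def Ys_def by blast
      ultimately have "\<not> PF \<subseteq> \<Union>?C" by (rule nf)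
      then obtain P where P: "P \<in> PF" "P \<notin> \<Union>?C" by blast
      have pf: "prime_filter A P" using P(1) by (simp add: PF_mem)
      have "y \<in> P" if "y \<in> Y0" for y
      proof -
        have "PF - th y \<in> ?C" using that by blast
        hence "P \<notin> PF - th y" using P(2) by blast
        hence "P \<in> th y" using P(1) by blast
        thus ?thesis by (simp add: th_mem)
      qed
      moreover have "x \<notin> P" if "x \<in> X0" for x
      proof -
        have "th x \<in> ?C" using that by blast
        hence "P \<notin> th x" using P(2) by blast
        thus ?thesis using pf by (simp add: th_mem)
      qed
      ultimately show ?thesis using pf by blast
    qed
    define F where "F = {c \<in> car. \<exists>Y0 m. finite Y0 \<and> Y0 \<subseteq> Ys \<and> m \<in> car \<and>
        (\<forall>P. prime_filter A P \<longrightarrow> (m \<in> P \<longleftrightarrow> Y0 \<subseteq> P)) \<and> le m c}"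
    define I where "I = {c \<in> car. \<exists>X0 j. finite X0 \<and> X0 \<subseteq> Xs \<and> j \<in> car \<and>
        (\<forall>P. prime_filter A P \<longrightarrow> (j \<in> P \<longleftrightarrow> X0 \<inter> P \<noteq> {})) \<and> le c j}"
    have Fin: "c \<in> F" if "c \<in> car" "finite Y0" "Y0 \<subseteq> Ys" "m \<in> car"
      "\<forall>P. prime_filter A P \<longrightarrow> (m \<in> P \<longleftrightarrow> Y0 \<subseteq> P)" "le m c" for c Y0 m
      unfolding F_def using that by blast
    have FE: "\<exists>Y0 m. c \<in> car \<and> finite Y0 \<and> Y0 \<subseteq> Ys \<and> m \<in> car \<and>
      (\<forall>P. prime_filter A P \<longrightarrow> (m \<in> P \<longleftrightarrow> Y0 \<subseteq> P)) \<and> le m c" if "c \<in> F" for c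
      using that unfolding F_def by blast
    have Iin: "c \<in> I" if "c \<in> car" "finite X0" "X0 \<subseteq> Xs" "j \<in> car"
      "\<forall>P. prime_filter A P \<longrightarrow> (j \<in> P \<longleftrightarrow> X0 \<inter> P \<noteq> {})" "le c j" for c X0 j
      unfolding I_def using that by blast
    have IE: "\<exists>X0 j. c \<in> car \<and> finite X0 \<and> X0 \<subseteq> Xs \<and> j \<in> car \<and>
      (\<forall>P. prime_filter A P \<longrightarrow> (j \<in> P \<longleftrightarrow> X0 \<inter> P \<noteq> {})) \<and> le c j" if "c \<in> I" for c
      using that unfolding I_def by blast
    have Ff: "filt F"
    proof (rule filtI)
      show "F \<subseteq> car" unfolding F_def by auto
      have "\<forall>P. prime_filter A P \<longrightarrow> (tp \<in> P \<longleftrightarrow> {} \<subseteq> P)" using pfD(2) by blast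
      thus "tp \<in> F" by (intro Fin[of tp "{}" tp]) (simp_all add: le_refl)
    next
      fix a b assume ab: "a \<in> F" "b \<in> car" "le a b"
      from FE[OF ab(1)] obtain Y0 m where m: "a \<in> car" "finite Y0" "Y0 \<subseteq> Ys" "m \<in> car"
        "\<forall>P. prime_filter A P \<longrightarrow> (m \<in> P \<longleftrightarrow> Y0 \<subseteq> P)" "le m a"
        by blast
      have "le m b" using le_trans[OF m(4) m(1) ab(2) m(6) ab(3)] .
      thus "b \<in> F" using Fin[OF ab(2) m(2-5)] by blast
    next
      fix a b assume ab: "a \<in> F" "b \<in> F"
      from FE[OF ab(1)] FE[OF ab(2)] obtain Y1 m1 Y2 m2 where 1: "a \<in> car" "finite Y1" "Y1 \<subseteq> Ys" "m1 \<in> car"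
        "\<forall>P. prime_filter A P \<longrightarrow> (m1 \<in> P \<longleftrightarrow> Y1 \<subseteq> P)" "le m1 a"
        and 2: "b \<in> car" "finite Y2" "Y2 \<subseteq> Ys" "m2 \<in> car"
        "\<forall>P. prime_filter A P \<longrightarrow> (m2 \<in> P \<longleftrightarrow> Y2 \<subseteq> P)" "le m2 b"
        by blast
      have "finite (Y1 \<union> Y2)" "Y1 \<union> Y2 \<subseteq> Ys" "mt m1 m2 \<in> car" using 1 2 by auto
      moreover have "\<forall>P. prime_filter A P \<longrightarrow> (mt m1 m2 \<in> P \<longleftrightarrow> Y1 \<union> Y2 \<subseteq> P)"
        using 1 2 pf_mt_iff by auto
      moreover have "le (mt m1 m2) (mt a b)" using 1 2 by (simp add: mt_mono)
      ultimately show "mt a b \<in> F" using Fin[of "mt a b" "Y1 \<union> Y2" "mt m1 m2"] 1 2 by (meson mt_in)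
    qed
    have If: "idl I"
    proof (rule idlI)
      show "I \<subseteq> car" unfolding I_def by auto
      have "\<forall>P. prime_filter A P \<longrightarrow> (bt \<in> P \<longleftrightarrow> {} \<inter> P \<noteq> {})" using pfD(3) by blast
      thus "bt \<in> I" by (intro Iin[of bt "{}" bt]) (simp_all add: le_refl)
    next
      fix a b assume ab: "a \<in> I" "b \<in> car" "le b a"
      from IE[OF ab(1)] obtain X0 j where m: "a \<in> car" "finite X0" "X0 \<subseteq> Xs" "j \<in> car"
        "\<forall>P. prime_filter A P \<longrightarrow> (j \<in> P \<longleftrightarrow> X0 \<inter> P \<noteq> {})" "le a j"
        by blast
      have "le b j" using le_trans[OF ab(2) m(1) m(4) ab(3) m(6)] .
      thus "b \<in> I" using Iin[OF ab(2) m(2-5)] by blast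
    next
      fix a b assume ab: "a \<in> I" "b \<in> I"
      from IE[OF ab(1)] obtain Y1 m1 where 1: "a \<in> car" "finite Y1" "Y1 \<subseteq> Xs" "m1 \<in> car"
        "\<forall>P. prime_filter A P \<longrightarrow> (m1 \<in> P \<longleftrightarrow> Y1 \<inter> P \<noteq> {})" "le a m1"
        by (elim exE conjE) (rule that)
      from IE[OF ab(2)] obtain Y2 m2 where 2: "b \<in> car" "finite Y2" "Y2 \<subseteq> Xs" "m2 \<in> car"
        "\<forall>P. prime_filter A P \<longrightarrow> (m2 \<in> P \<longleftrightarrow> Y2 \<inter> P \<noteq> {})" "le b m2"
        by (elim exE conjE) (rule that)
      have "finite (Y1 \<union> Y2)" "Y1 \<union> Y2 \<subseteq> Xs" "jn m1 m2 \<in> car" using 1 2 by auto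
      moreover have "\<forall>P. prime_filter A P \<longrightarrow> (jn m1 m2 \<in> P \<longleftrightarrow> (Y1 \<union> Y2) \<inter> P \<noteq> {})"
        using 1 2 pf_jn_iff by auto
      moreover have "le (jn a b) (jn m1 m2)" using 1 2 by (simp add: jn_mono)
      ultimately show "jn a b \<in> I" using Iin[of "jn a b" "Y1 \<union> Y2" "jn m1 m2"] 1 2 by (meson jn_in)
    qed
    have disj: "F \<inter> I = {}"
    proof (rule ccontr)
      assume "F \<inter> I \<noteq> {}"
      then obtain c where c1: "c \<in> F" "c \<in> I" by blast
      from FE[OF c1(1)] obtain Y0 m where c: "c \<in> car" and
        y: "finite Y0" "Y0 \<subseteq> Ys" "m \<in> car" "\<forall>P. prime_filter A P \<longrightarrow> (m \<in> P \<longleftrightarrow> Y0 \<subseteq> P)" "le m c"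
        by (elim exE conjE) (rule that)
      from IE[OF c1(2)] obtain X0 j where
        x: "finite X0" "X0 \<subseteq> Xs" "j \<in> car" "\<forall>P. prime_filter A P \<longrightarrow> (j \<in> P \<longleftrightarrow> X0 \<inter> P \<noteq> {})" "le c j"
        by (elim exE conjE) (rule that)
      obtain P where P: "prime_filter A P" "Y0 \<subseteq> P" "X0 \<inter> P = {}" using noc[OF x(1,2) y(1,2)] by blast
      have "m \<in> P" using y P by auto
      hence "j \<in> P" using pfD(4)[OF P(1)] le_trans[OF y(3) c x(3) y(5) x(5)] x(3) by blast
      thus False using x P by auto
    qed
    obtain P where P: "prime_filter A P" "F \<subseteq> P" "P \<inter> I = {}" using pft[OF Ff If disj] by blast
    have "P \<in> PF" using P by (simp add: PF_mem)
    then obtain S where S: "S \<in> Cv" "P \<in> S" using cov by auto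
    hence "S \<in> Sb" using Cv by auto
    then consider a where "a \<in> car" "S = th a" | b where "b \<in> car" "S = PF - th b" unfolding Sb_def by auto
    thus False
    proof cases
      case 1
      hence "a \<in> Xs" using S unfolding Xs_def by auto
      moreover have "a \<in> P" using S 1 by (simp add: th_mem)
      moreover have "\<forall>P. prime_filter A P \<longrightarrow> (a \<in> P \<longleftrightarrow> {a} \<inter> P \<noteq> {})" by blast
      hence "a \<in> I" using Iin[of a "{a}" a] 1 \<open>a \<in> Xs\<close> le_refl[of a] by blast
      ultimately show False using P by blast
    next
      case 2
      hence "b \<in> Ys" using S unfolding Ys_def by auto
      moreover have "\<forall>P. prime_filter A P \<longrightarrow> (b \<in> P \<longleftrightarrow> {b} \<subseteq> P)" by blast
      ultimately have "b \<in> F" using Fin[of b "{b}" b] 2 le_refl[of b] by blast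
      hence "b \<in> P" using P by auto
      thus False using S 2 P by (simp add: th_mem)
    qed
  qed
qed

end


lemma is_upsetD: "is_upset X U \<Longrightarrow> x \<in> U \<Longrightarrow> y \<in> pts X \<Longrightarrow> leq X x y \<Longrightarrow> y \<in> U"
  unfolding is_upset_def by blast

lemma is_upset_sub: "is_upset X U \<Longrightarrow> U \<subseteq> pts X"
  unfolding is_upset_def by blast

lemma compactin_cover:
  assumes "compactin T K" "\<And>k. k \<in> K \<Longrightarrow> openin T (U k)" "\<And>k. k \<in> K \<Longrightarrow> k \<in> U k"
  shows "\<exists>K0. finite K0 \<and> K0 \<subseteq> K \<and> K \<subseteq> \<Union>(U ` K0)"
proof -
  have "\<forall>V\<in>U ` K. openin T V" using assms(2) by blast
  moreover have "K \<subseteq> \<Union>(U ` K)" using assms(3) by blast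
  ultimately obtain F where F: "finite F" "F \<subseteq> U ` K" "K \<subseteq> \<Union>F"
    using assms(1) unfolding compactin_def by meson
  then obtain K0 where "K0 \<subseteq> K" "finite K0" "F = U ` K0" using finite_subset_image[OF F(1,2)] by blast
  thus ?thesis using F by blast
qed

lemma clopen_fin_union:
  assumes cpt: "compact_space T" and Vc: "closedin T V" and Vo: "openin T V"
    and B: "\<And>W. W \<in> B \<Longrightarrow> closedin T W \<and> openin T W" and top: "topspace T \<in> B"
    and int: "\<And>W1 W2. W1 \<in> B \<Longrightarrow> W2 \<in> B \<Longrightarrow> W1 \<inter> W2 \<in> B"
    and sep: "\<And>P Q. P \<in> V \<Longrightarrow> Q \<in> topspace T \<Longrightarrow> Q \<notin> V \<Longrightarrow> \<exists>W\<in>B. P \<in> W \<and> Q \<notin> W"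
  shows "\<exists>F. finite F \<and> F \<subseteq> B \<and> V = \<Union>F"
proof -
  have finint: "topspace T \<inter> \<Inter>(W ` K) \<in> B" if "finite K" "\<forall>k\<in>K. W k \<in> B" for K and W :: "'b \<Rightarrow> 'a set"
    using that
  proof (induction K rule: finite_induct)
    case empty
    then show ?case using top by simp
  next
    case (insert x F)
    have "topspace T \<inter> \<Inter>(W ` insert x F) = W x \<inter> (topspace T \<inter> \<Inter>(W ` F))" by auto
    then show ?case using insert int by auto
  qed
  have Vsub: "V \<subseteq> topspace T" using openin_subset[OF Vo] .
  have loc: "\<exists>W\<in>B. P \<in> W \<and> W \<subseteq> V" if P: "P \<in> V" for P
  proof -
    let ?K = "topspace T - V"
    have Kc: "compactin T ?K" using closedin_compact_space[OF cpt] Vo by blast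
    have "\<forall>Q\<in>?K. \<exists>W. W \<in> B \<and> P \<in> W \<and> Q \<notin> W" using sep P by blast
    then obtain Wf where Wf: "\<And>Q. Q \<in> ?K \<Longrightarrow> Wf Q \<in> B \<and> P \<in> Wf Q \<and> Q \<notin> Wf Q" by metis
    have op: "openin T (topspace T - Wf Q)" if "Q \<in> ?K" for Q
      using B Wf that by blast
    have mem: "Q \<in> topspace T - Wf Q" if "Q \<in> ?K" for Q using Wf that by blast
    obtain K0 where K0: "finite K0" "K0 \<subseteq> ?K" "?K \<subseteq> \<Union>((\<lambda>Q. topspace T - Wf Q) ` K0)"
      using compactin_cover[OF Kc op mem] by blast
    let ?W = "topspace T \<inter> \<Inter>(Wf ` K0)"
    have "?W \<in> B" using finint[OF K0(1)] Wf K0(2) by blast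
    moreover have "P \<in> ?W" using Wf K0(2) P Vsub by blast
    moreover have "?W \<subseteq> V" using K0(3) by blast
    ultimately show ?thesis by blast
  qed
  then obtain Wp where Wp: "\<And>P. P \<in> V \<Longrightarrow> Wp P \<in> B \<and> P \<in> Wp P \<and> Wp P \<subseteq> V" by metis
  have Vk: "compactin T V" using closedin_compact_space[OF cpt Vc] .
  obtain V0 where V0: "finite V0" "V0 \<subseteq> V" "V \<subseteq> \<Union>(Wp ` V0)"
  proof -
    have op2: "openin T (Wp P)" if "P \<in> V" for P using Wp[OF that] B by blast
    have mem2: "P \<in> Wp P" if "P \<in> V" for P using Wp[OF that] by blast
    show ?thesis using compactin_cover[OF Vk op2 mem2] that by blast
  qed
  show ?thesis
    using V0 Wp by (intro exI[of _ "Wp ` V0"]) blast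
qed

context HA
begin

lemma down_pf: "down (pf A) S = {Q \<in> PF. \<exists>P\<in>S. Q \<subseteq> P}"
  by (simp add: down_def pf_simps)

lemma pf_filt: "prime_filter A P \<Longrightarrow> filt P"
  by (rule filtI) (auto dest: pfD)

lemma down_th_diff: assumes a: "a \<in> car" and b: "b \<in> car"
  shows "down (pf A) (th a - th b) = PF - th (im a b)"
proof
  show "down (pf A) (th a - th b) \<subseteq> PF - th (im a b)"
  proof
    fix Q assume "Q \<in> down (pf A) (th a - th b)"
    then obtain P where Q: "Q \<in> PF" and P: "P \<in> th a" "P \<notin> th b" "Q \<subseteq> P" by (auto simp: down_pf)
    have pP: "prime_filter A P" "a \<in> P" "b \<notin> P" using P by (auto simp: th_mem)
    have "im a b \<notin> P" using pf_im[OF pP(1) a b] pP by blast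
    hence "im a b \<notin> Q" using P(3) by blast
    thus "Q \<in> PF - th (im a b)" using Q by (simp add: th_mem)
  qed
next
  show "PF - th (im a b) \<subseteq> down (pf A) (th a - th b)"
  proof
    fix Q assume Q: "Q \<in> PF - th (im a b)"
    hence pQ: "prime_filter A Q" and nQ: "im a b \<notin> Q" by (auto simp: th_mem PF_mem)
    let ?G = "{c \<in> car. \<exists>m\<in>Q. le (mt m a) c}"
    have G: "filt ?G" using gen_filt[OF pf_filt[OF pQ] a] .
    have "b \<notin> ?G"
    proof
      assume "b \<in> ?G"
      then obtain m where m: "m \<in> Q" "le (mt m a) b" by blast
      have mc: "m \<in> car" using m pfD(1)[OF pQ] by blast
      have "le m (im a b)" using im_adj[OF a b mc] m by simp
      hence "im a b \<in> Q" using pfD(4)[OF pQ m(1)] a b by simp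
      thus False using nQ by blast
    qed
    then obtain P where P: "prime_filter A P" "?G \<subseteq> P" "b \<notin> P" using pf_sep[OF G b] by blast
    have "Q \<subseteq> P" using gen_filt_sub[OF pf_filt[OF pQ] a] P(2) by blast
    moreover have "a \<in> P" using gen_filt_in[OF pf_filt[OF pQ] a] P(2) by blast
    ultimately have "P \<in> th a - th b" "Q \<subseteq> P" using P by (auto simp: th_mem)
    moreover have "Q \<in> PF" using pQ by (simp add: PF_mem)
    ultimately show "Q \<in> down (pf A) (th a - th b)" unfolding down_pf by blast
  qed
qed

lemma hausdorff_PT: "Hausdorff_space PT"
  unfolding Hausdorff_space_def topspace_PT
proof (intro allI impI)
  fix x y assume xy: "x \<in> PF \<and> y \<in> PF \<and> x \<noteq> y"
  hence px: "prime_filter A x" and py: "prime_filter A y" by (auto simp: PF_mem)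
  have sep: "\<exists>U V. openin PT U \<and> openin PT V \<and> u \<in> U \<and> v \<in> V \<and> disjnt U V"
    if a: "a \<in> u" "a \<notin> v" and pu: "prime_filter A u" and pv: "prime_filter A v" for u v a
  proof -
    have ac: "a \<in> car" using a pfD(1)[OF pu] by blast
    have "u \<in> th a" using pu a by (simp add: th_mem)
    moreover have "v \<in> PF - th a" using pv a by (simp add: th_mem PF_mem)
    moreover have "disjnt (th a) (PF - th a)" by (simp add: disjnt_def)
    ultimately show ?thesis using open_th[OF ac] open_cth[OF ac] by blast
  qed
  show "\<exists>U V. openin PT U \<and> openin PT V \<and> x \<in> U \<and> y \<in> V \<and> disjnt U V"
  proof (cases "x \<subseteq> y")
    case True
    hence "\<not> y \<subseteq> x" using xy subset_antisym by blast
    then obtain a where a: "a \<in> y" "a \<notin> x" by blast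
    obtain U V where "openin PT U" "openin PT V" "y \<in> U" "x \<in> V" "disjnt U V" using sep[OF a py px] by blast
    thus ?thesis by (meson disjnt_sym)
  next
    case False
    then obtain a where a: "a \<in> x" "a \<notin> y" by blast
    show ?thesis using sep[OF a px py] .
  qed
qed

lemma th_clopen_upset: assumes a: "a \<in> car" shows "th a \<in> clopen_upsets (pf A)"
proof -
  have "is_upset (pf A) (th a)"
    unfolding is_upset_def pf_simps
  proof (intro conjI ballI impI)
    show "th a \<subseteq> PF" by (rule th_sub)
    fix x y assume "x \<in> th a" "y \<in> PF" "x \<subseteq> y"
    thus "y \<in> th a" by (auto simp: th_mem PF_mem)
  qed
  thus ?thesis unfolding clopen_upsets_def is_clopen_def using open_th[OF a] closed_th[OF a] by blast
qed

lemma fin_union_th: "finite K \<Longrightarrow> K \<subseteq> th ` car \<Longrightarrow> \<Union>K \<in> th ` car"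
proof (induction K rule: finite_induct)
  case empty
  then show ?case using th_bt bt_in by (metis Sup_empty image_eqI)
next
  case (insert x F)
  then obtain a b where ab: "a \<in> car" "x = th a" "b \<in> car" "\<Union>F = th b" by auto
  hence "\<Union>(insert x F) = th (jn a b)" using th_jn by simp
  thus ?case using ab by simp
qed

lemma clopen_upsets_pf: "clopen_upsets (pf A) = th ` car"
proof
  show "th ` car \<subseteq> clopen_upsets (pf A)" using th_clopen_upset by blast
next
  show "clopen_upsets (pf A) \<subseteq> th ` car"
  proof
    fix U assume U: "U \<in> clopen_upsets (pf A)"
    hence Uc: "closedin PT U" "openin PT U" and Uup: "is_upset (pf A) U"
      by (auto simp: clopen_upsets_def is_clopen_def)
    have "\<exists>F. finite F \<and> F \<subseteq> th ` car \<and> U = \<Union>F"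
    proof (rule clopen_fin_union[OF compact_PT Uc])
      show "\<And>W. W \<in> th ` car \<Longrightarrow> closedin PT W \<and> openin PT W" using open_th closed_th by blast
      show "topspace PT \<in> th ` car" by (rule image_eqI[of _ _ tp]) (simp_all add: topspace_PT th_tp)
      show "W1 \<inter> W2 \<in> th ` car" if W12: "W1 \<in> th ` car" "W2 \<in> th ` car" for W1 W2
      proof -
        obtain a b where "a \<in> car" "b \<in> car" "W1 = th a" "W2 = th b" using W12 by blast
        thus ?thesis by (intro image_eqI[of _ _ "mt a b"]) (simp_all add: th_mt)
      qed
    next
      fix P Q assume P: "P \<in> U" and Q: "Q \<in> topspace PT" "Q \<notin> U"
      have "U \<subseteq> PF" using Uup unfolding is_upset_def pf_simps by blast
      hence "P \<in> PF" using P by blast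
      have "\<not> P \<subseteq> Q"
      proof
        assume "P \<subseteq> Q"
        moreover have "Q \<in> PF" using Q(1) topspace_PT by simp
        ultimately have "Q \<in> U" using is_upsetD[OF Uup P, of Q] by (simp add: pf_simps(1,2))
        thus False using Q by blast
      qed
      then obtain a where a: "a \<in> P" "a \<notin> Q" by blast
      have "a \<in> car" using a \<open>P \<in> PF\<close> pfD(1) by (auto simp: PF_mem)
      thus "\<exists>W\<in>th ` car. P \<in> W \<and> Q \<notin> W" using a \<open>P \<in> PF\<close> by (auto simp: th_mem PF_mem)
    qed
    thus "U \<in> th ` car" using fin_union_th by blast
  qed
qed

definition "Bd = {th a - th b | a b. a \<in> car \<and> b \<in> car}"

lemma BdI: "a \<in> car \<Longrightarrow> b \<in> car \<Longrightarrow> th a - th b \<in> Bd"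
  unfolding Bd_def by (rule CollectI, rule exI[of _ a], rule exI[of _ b]) simp

lemma BdE: "W \<in> Bd \<Longrightarrow> (\<And>a b. a \<in> car \<Longrightarrow> b \<in> car \<Longrightarrow> W = th a - th b \<Longrightarrow> thesis) \<Longrightarrow> thesis"
  unfolding Bd_def by (elim CollectE exE conjE) metis

lemma down_clopen: assumes V: "is_clopen (pf A) V" shows "is_clopen (pf A) (down (pf A) V)"
proof -
  have Vc: "closedin PT V" "openin PT V" using V by (auto simp: is_clopen_def)
  have "\<exists>F. finite F \<and> F \<subseteq> Bd \<and> V = \<Union>F"
  proof (rule clopen_fin_union[OF compact_PT Vc])
    show "closedin PT W \<and> openin PT W" if W: "W \<in> Bd" for W
    proof -
      obtain a b where "a \<in> car" "b \<in> car" "W = th a - th b" using W by (rule BdE)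
      thus ?thesis using closedin_diff[OF closed_th open_th] openin_diff[OF open_th closed_th] by simp
    qed
    have "topspace PT = th tp - th bt" by (simp only: topspace_PT th_tp th_bt Diff_empty)
    moreover have "th tp - th bt \<in> Bd" using tp_in bt_in by (rule BdI)
    ultimately show "topspace PT \<in> Bd" by simp
  next
    fix W1 W2 assume W12: "W1 \<in> Bd" "W2 \<in> Bd"
    obtain a b where "a \<in> car" "b \<in> car" "W1 = th a - th b" using W12(1) by (rule BdE)
    moreover obtain c d where "c \<in> car" "d \<in> car" "W2 = th c - th d" using W12(2) by (rule BdE)
    moreover have "(th a - th b) \<inter> (th c - th d) = th (mt a c) - th (jn b d)" if "a \<in> car" "b \<in> car" "c \<in> car" "d \<in> car" for a b c d
      using that th_mt th_jn by auto
    ultimately have "W1 \<inter> W2 = th (mt a c) - th (jn b d)" by simp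
    thus "W1 \<inter> W2 \<in> Bd" using BdI[of "mt a c" "jn b d"] mt_in jn_in \<open>a \<in> car\<close> \<open>b \<in> car\<close> \<open>c \<in> car\<close> \<open>d \<in> car\<close> by simp
  next
    fix P Q assume P: "P \<in> V" and Q: "Q \<in> topspace PT" "Q \<notin> V"
    have PQ: "P \<in> PF" "Q \<in> PF" "P \<noteq> Q" using P Q openin_subset[OF Vc(2)] topspace_PT by auto
    hence pp: "prime_filter A P" "prime_filter A Q" by (auto simp: PF_mem)
    show "\<exists>W\<in>Bd. P \<in> W \<and> Q \<notin> W"
    proof (cases "P \<subseteq> Q")
      case True
      hence "\<not> Q \<subseteq> P" using PQ subset_antisym by blast
      then obtain a where a: "a \<in> Q" "a \<notin> P" by blast
      have ac: "a \<in> car" using a pfD(1)[OF pp(2)] by blast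
      have W: "th tp - th a \<in> Bd" using tp_in ac by (rule BdI)
      have P1: "P \<in> th tp" using pp(1) pfD(2)[OF pp(1)] by (simp add: th_mem)
      have P2: "P \<notin> th a" "Q \<in> th a" using pp a by (simp_all add: th_mem)
      show ?thesis
      proof (rule bexI[OF _ W], rule conjI)
        show "P \<in> th tp - th a" using P1 P2(1) by (rule DiffI)
        show "Q \<notin> th tp - th a" using P2(2) by simp
      qed
    next
      case False
      then obtain a where a: "a \<in> P" "a \<notin> Q" by blast
      have ac: "a \<in> car" using a pfD(1)[OF pp(1)] by blast
      have W: "th a - th bt \<in> Bd" using ac bt_in by (rule BdI)
      have P2: "P \<in> th a" "Q \<notin> th a" using pp a by (simp_all add: th_mem)
      show ?thesis
      proof (rule bexI[OF _ W], rule conjI)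
        show "P \<in> th a - th bt" using P2(1) th_bt by simp
        show "Q \<notin> th a - th bt" using P2(2) by simp
      qed
    qed
  qed
  then obtain F where F: "finite F" "F \<subseteq> Bd" "V = \<Union>F" by blast
  have dU: "down (pf A) V = \<Union>((down (pf A)) ` F)" unfolding F(3) down_def by blast
  have "\<And>W. W \<in> F \<Longrightarrow> is_clopen (pf A) (down (pf A) W)"
  proof -
    fix W assume "W \<in> F"
    hence "W \<in> Bd" using F(2) by blast
    then obtain a b where ab: "a \<in> car" "b \<in> car" "W = th a - th b" by (rule BdE)
    hence "down (pf A) W = PF - th (im a b)" using down_th_diff by simp
    thus "is_clopen (pf A) (down (pf A) W)" using open_cth closed_cth ab im_in
      by (simp add: is_clopen_def pf_simps)
  qed
  thus ?thesis unfolding dU is_clopen_def using F(1)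
    by (auto intro!: closedin_Union openin_Union)
qed

end


locale CHA = HA +
  assumes chaA: "cha A"
begin

abbreviation "cnd \<equiv> hcond A"

lemma cha_parts: "(\<forall>a\<in>car. \<forall>b\<in>car. cnd a b \<in> car) \<and>
     (\<forall>a\<in>car. \<forall>b\<in>car. \<forall>c\<in>car. cnd a (mt b c) = mt (cnd a b) (cnd a c)) \<and>
     (\<forall>a\<in>car. cnd a tp = tp)"
  using chaA unfolding cha_def by (elim conjE) (intro conjI)

lemma cnd_in[simp]: "a \<in> car \<Longrightarrow> b \<in> car \<Longrightarrow> cnd a b \<in> car"
  using cha_parts by blast

lemma cnd_mt: "a \<in> car \<Longrightarrow> b \<in> car \<Longrightarrow> c \<in> car \<Longrightarrow> cnd a (mt b c) = mt (cnd a b) (cnd a c)"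
  using cha_parts by blast

lemma cnd_tp: "a \<in> car \<Longrightarrow> cnd a tp = tp"
  using cha_parts by blast

lemma cnd_mono: assumes abc: "a \<in> car" "b \<in> car" "c \<in> car" and bc: "le b c"
  shows "le (cnd a b) (cnd a c)"
proof -
  have "mt b c = b" using bc by (simp add: le_def')
  hence "cnd a b = mt (cnd a b) (cnd a c)" using cnd_mt[OF abc] by simp
  moreover have "le (mt (cnd a b) (cnd a c)) (cnd a c)" using abc by (simp add: mt_le2)
  ultimately show ?thesis by simp
qed

lemma cfilt: assumes x: "prime_filter A x" and a: "a \<in> car"
  shows "filt {c \<in> car. cnd a c \<in> x}"
proof (rule filtI)
  show "{c \<in> car. cnd a c \<in> x} \<subseteq> car" by blast
  show "tp \<in> {c \<in> car. cnd a c \<in> x}" using cnd_tp[OF a] pfD(2)[OF x] by simp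
next
  fix b c assume b: "b \<in> {c \<in> car. cnd a c \<in> x}" and c: "c \<in> car" and bc: "le b c"
  have "le (cnd a b) (cnd a c)" using cnd_mono[OF a _ c bc] b by blast
  hence "cnd a c \<in> x" using pfD(4)[OF x, of "cnd a b" "cnd a c"] b a c by simp
  thus "c \<in> {c \<in> car. cnd a c \<in> x}" using c by simp
next
  fix b c assume b: "b \<in> {c \<in> car. cnd a c \<in> x}" and c: "c \<in> {c \<in> car. cnd a c \<in> x}"
  have "cnd a (mt b c) = mt (cnd a b) (cnd a c)" using cnd_mt[OF a] b c by simp
  moreover have "mt (cnd a b) (cnd a c) \<in> x" using pfD(5)[OF x] b c by simp
  ultimately show "mt b c \<in> {c \<in> car. cnd a c \<in> x}" using b c by simp
qed

lemma rel_pf_def: "rel (pf A) S x y \<longleftrightarrow> prime_filter A x \<and> prime_filter A y \<and>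
   (\<exists>a\<in>car. S = th a \<and> {b \<in> car. cnd a b \<in> x} \<subseteq> y)"
  by (simp add: pf_def)

lemma rel_pf: assumes a: "a \<in> car"
  shows "rel (pf A) (th a) x y \<longleftrightarrow> prime_filter A x \<and> prime_filter A y \<and> {b \<in> car. cnd a b \<in> x} \<subseteq> y"
proof
  assume "rel (pf A) (th a) x y"
  then obtain a' where "prime_filter A x" "prime_filter A y" "a' \<in> car" "th a = th a'"
    "{b \<in> car. cnd a' b \<in> x} \<subseteq> y" unfolding rel_pf_def by blast
  moreover have "a = a'" using th_inj[OF a] calculation by blast
  ultimately show "prime_filter A x \<and> prime_filter A y \<and> {b \<in> car. cnd a b \<in> x} \<subseteq> y" by blast
next
  assume "prime_filter A x \<and> prime_filter A y \<and> {b \<in> car. cnd a b \<in> x} \<subseteq> y"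
  thus "rel (pf A) (th a) x y" unfolding rel_pf_def using a by blast
qed

lemma ccond_pf: assumes a: "a \<in> car" and b: "b \<in> car"
  shows "ccond (pf A) (th a) (th b) = th (cnd a b)"
proof
  show "ccond (pf A) (th a) (th b) \<subseteq> th (cnd a b)"
  proof
    fix x assume x: "x \<in> ccond (pf A) (th a) (th b)"
    hence px: "prime_filter A x" and R: "\<And>y. rel (pf A) (th a) x y \<Longrightarrow> y \<in> th b"
      unfolding ccond_def by (auto simp: pf_simps PF_mem)
    have "cnd a b \<in> x"
    proof (rule ccontr)
      assume nb: "cnd a b \<notin> x"
      have "b \<notin> {c \<in> car. cnd a c \<in> x}" using nb by blast
      then obtain P where P: "prime_filter A P" "{c \<in> car. cnd a c \<in> x} \<subseteq> P" "b \<notin> P"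
        using pf_sep[OF cfilt[OF px a] b] by blast
      have "rel (pf A) (th a) x P" using rel_pf[OF a] px P by blast
      hence "P \<in> th b" by (rule R)
      thus False using P(3) by (simp add: th_mem)
    qed
    thus "x \<in> th (cnd a b)" using px by (simp add: th_mem)
  qed
next
  show "th (cnd a b) \<subseteq> ccond (pf A) (th a) (th b)"
  proof
    fix x assume x: "x \<in> th (cnd a b)"
    hence px: "prime_filter A x" and cx: "cnd a b \<in> x" by (auto simp: th_mem)
    have "y \<in> th b" if "rel (pf A) (th a) x y" for y
    proof -
      have "prime_filter A y" "{c \<in> car. cnd a c \<in> x} \<subseteq> y" using that rel_pf[OF a] by blast+
      thus ?thesis using cx b by (auto simp: th_mem)
    qed
    thus "x \<in> ccond (pf A) (th a) (th b)" unfolding ccond_def using px by (auto simp: pf_simps PF_mem)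
  qed
qed

lemma Rset_pf: assumes a: "a \<in> car" and x: "prime_filter A x"
  shows "{y. rel (pf A) (th a) x y} = \<Inter>(th ` {c \<in> car. cnd a c \<in> x})"
proof
  show "{y. rel (pf A) (th a) x y} \<subseteq> \<Inter>(th ` {c \<in> car. cnd a c \<in> x})"
    using rel_pf[OF a] by (auto simp: th_mem)
next
  show "\<Inter>(th ` {c \<in> car. cnd a c \<in> x}) \<subseteq> {y. rel (pf A) (th a) x y}"
  proof
    fix y assume y: "y \<in> \<Inter>(th ` {c \<in> car. cnd a c \<in> x})"
    have "tp \<in> {c \<in> car. cnd a c \<in> x}" using cnd_tp[OF a] pfD(2)[OF x] by simp
    hence "y \<in> th tp" using y by blast
    hence py: "prime_filter A y" by (simp add: th_mem)
    have "{c \<in> car. cnd a c \<in> x} \<subseteq> y" using y by (auto simp: th_mem)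
    thus "y \<in> {y. rel (pf A) (th a) x y}" using rel_pf[OF a] x py by blast
  qed
qed

lemma closed_R: assumes a: "a \<in> car" and x: "prime_filter A x"
  shows "closedin PT {y. rel (pf A) (th a) x y}"
proof -
  have "tp \<in> {c \<in> car. cnd a c \<in> x}" using cnd_tp[OF a] pfD(2)[OF x] by simp
  hence ne: "th ` {c \<in> car. cnd a c \<in> x} \<noteq> {}" by blast
  show ?thesis unfolding Rset_pf[OF a x] by (rule closedin_Inter[OF ne]) (auto intro: closed_th)
qed

lemma ces_pf: "ces (pf A)"
  unfolding ces_def
proof (rule conjI)
  show "esakia_space (pf A)"
    unfolding esakia_space_def
  proof (intro conjI ballI impI allI)
    show "topspace (topo (pf A)) = pts (pf A)" using topspace_PT by (simp add: pf_simps(1))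
    show "pts (pf A) \<noteq> {}" using pf_exists by (auto simp: pf_simps PF_mem)
    show "compact_space (topo (pf A))" by (rule compact_PT)
    fix x assume "x \<in> pts (pf A)" thus "leq (pf A) x x" by (simp add: pf_simps)
  next
    fix x y assume "x \<in> pts (pf A)" "y \<in> pts (pf A)" "leq (pf A) x y \<and> leq (pf A) y x"
    hence "x \<subseteq> y" "y \<subseteq> x" by (simp_all add: pf_simps)
    thus "x = y" by (rule subset_antisym)
  next
    fix x y z assume "x \<in> pts (pf A)" "y \<in> pts (pf A)" "z \<in> pts (pf A)" "leq (pf A) x y \<and> leq (pf A) y z"
    hence "x \<subseteq> y" "y \<subseteq> z" by (simp_all add: pf_simps)
    hence "x \<subseteq> z" by (rule subset_trans)
    thus "leq (pf A) x z" by (simp add: pf_simps)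
  next
    fix x y assume x: "x \<in> pts (pf A)" and y: "y \<in> pts (pf A)" and xy: "\<not> leq (pf A) x y"
    then obtain a where a: "a \<in> x" "a \<notin> y" by (auto simp: pf_simps)
    have px: "prime_filter A x" and py: "prime_filter A y" using x y by (auto simp: pf_simps PF_mem)
    have ac: "a \<in> car" using a pfD(1)[OF px] by blast
    have "x \<in> th a" "y \<notin> th a" using a px py by (simp_all add: th_mem)
    thus "\<exists>U\<in>clopen_upsets (pf A). x \<in> U \<and> y \<notin> U" using th_clopen_upset[OF ac] by blast
  next
    fix U assume "is_clopen (pf A) U" thus "is_clopen (pf A) (down (pf A) U)" by (rule down_clopen)
  qed
next
  show "\<forall>a\<in>clopen_upsets (pf A).
        (\<forall>x y. rel (pf A) a x y \<longrightarrow> x \<in> pts (pf A) \<and> y \<in> pts (pf A)) \<and>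
        (\<forall>b\<in>clopen_upsets (pf A). is_clopen (pf A) (ccond (pf A) a b)) \<and>
        (\<forall>x\<in>pts (pf A). \<forall>y\<in>pts (pf A).
           (\<exists>x'\<in>pts (pf A). \<exists>y'\<in>pts (pf A). leq (pf A) x x' \<and> rel (pf A) a x' y' \<and> leq (pf A) y' y) \<longleftrightarrow> rel (pf A) a x y) \<and>
        (\<forall>x\<in>pts (pf A). closedin (topo (pf A)) {y. rel (pf A) a x y})"
  proof (rule ballI)
  fix a assume "a \<in> clopen_upsets (pf A)"
  then obtain a0 where a0: "a0 \<in> car" "a = th a0" unfolding clopen_upsets_pf by blast
  have 1: "\<forall>x y. rel (pf A) a x y \<longrightarrow> x \<in> pts (pf A) \<and> y \<in> pts (pf A)"
    using rel_pf[OF a0(1)] a0(2) by (simp add: pf_simps PF_mem)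
  have 2: "\<forall>b\<in>clopen_upsets (pf A). is_clopen (pf A) (ccond (pf A) a b)"
  proof
    fix b assume "b \<in> clopen_upsets (pf A)"
    then obtain b0 where b0: "b0 \<in> car" "b = th b0" unfolding clopen_upsets_pf by blast
    have "ccond (pf A) a b = th (cnd a0 b0)" using ccond_pf[OF a0(1) b0(1)] a0 b0 by simp
    thus "is_clopen (pf A) (ccond (pf A) a b)" using th_clopen_upset[of "cnd a0 b0"] a0 b0
      by (simp add: clopen_upsets_def)
  qed
  have 3: "\<forall>x\<in>pts (pf A). \<forall>y\<in>pts (pf A).
       (\<exists>x'\<in>pts (pf A). \<exists>y'\<in>pts (pf A). leq (pf A) x x' \<and> rel (pf A) a x' y' \<and> leq (pf A) y' y) \<longleftrightarrow>
       rel (pf A) a x y"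
  proof (intro ballI iffI)
    fix x y assume x: "x \<in> pts (pf A)" and y: "y \<in> pts (pf A)"
    {
      assume "\<exists>x'\<in>pts (pf A). \<exists>y'\<in>pts (pf A). leq (pf A) x x' \<and> rel (pf A) a x' y' \<and> leq (pf A) y' y"
      then obtain x' y' where "x \<subseteq> x'" "y' \<subseteq> y" "{b \<in> car. cnd a0 b \<in> x'} \<subseteq> y'"
        using rel_pf[OF a0(1)] a0(2) by (auto simp: pf_simps)
      hence "{b \<in> car. cnd a0 b \<in> x} \<subseteq> y" by blast
      thus "rel (pf A) a x y" using rel_pf[OF a0(1)] a0(2) x y by (simp add: pf_simps PF_mem)
    }
    {
      assume "rel (pf A) a x y"
      thus "\<exists>x'\<in>pts (pf A). \<exists>y'\<in>pts (pf A). leq (pf A) x x' \<and> rel (pf A) a x' y' \<and> leq (pf A) y' y"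
        using x y by (auto simp: pf_simps)
    }
  qed
  have 4: "\<forall>x\<in>pts (pf A). closedin (topo (pf A)) {y. rel (pf A) a x y}"
    using closed_R[OF a0(1)] a0(2) by (simp add: pf_simps(1) PF_mem)
  show "(\<forall>x y. rel (pf A) a x y \<longrightarrow> x \<in> pts (pf A) \<and> y \<in> pts (pf A)) \<and>
        (\<forall>b\<in>clopen_upsets (pf A). is_clopen (pf A) (ccond (pf A) a b)) \<and>
        (\<forall>x\<in>pts (pf A). \<forall>y\<in>pts (pf A).
           (\<exists>x'\<in>pts (pf A). \<exists>y'\<in>pts (pf A). leq (pf A) x x' \<and> rel (pf A) a x' y' \<and> leq (pf A) y' y) \<longleftrightarrow> rel (pf A) a x y) \<and>
        (\<forall>x\<in>pts (pf A). closedin (topo (pf A)) {y. rel (pf A) a x y})"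
    using 1 2 3 4 by (intro conjI)
  qed
qed

lemma th_im: assumes a: "a \<in> car" and b: "b \<in> car"
  shows "th (im a b) = PF - down (pf A) (th a - th b)"
  using down_th_diff[OF a b] th_sub by auto

lemma clpup_pf: "hcarrier (clpup (pf A)) = th ` car" "htop (clpup (pf A)) = PF" "hbot (clpup (pf A)) = {}"
  "hmeet (clpup (pf A)) = (\<inter>)" "hjoin (clpup (pf A)) = (\<union>)"
  "himp (clpup (pf A)) = (\<lambda>a b. PF - down (pf A) (a - b))" "hcond (clpup (pf A)) = ccond (pf A)"
  by (simp_all add: clpup_def clopen_upsets_pf pf_simps(1))

lemma th_hom: "cha_hom A (clpup (pf A)) th"
  unfolding cha_hom_def clpup_pf
proof (intro conjI ballI)
  show "th \<in> car \<rightarrow> th ` car" by blast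
  show "th tp = PF" by (rule th_tp)
  show "th bt = {}" by (rule th_bt)
  fix a b assume a: "a \<in> car" and b: "b \<in> car"
  show "th (mt a b) = th a \<inter> th b" using th_mt[OF a b] .
  show "th (jn a b) = th a \<union> th b" using th_jn[OF a b] .
  show "th (im a b) = PF - down (pf A) (th a - th b)" using th_im[OF a b] .
  show "th (cnd a b) = ccond (pf A) (th a) (th b)" using ccond_pf[OF a b] by simp
qed

lemma th_inj_on: "inj_on th car"
  using th_inj by (auto simp: inj_on_def)

lemma th_iso: "cha_iso A (clpup (pf A)) th"
  unfolding cha_iso_def
proof (intro conjI exI[of _ "inv_into car th"])
  show "cha_hom A (clpup (pf A)) th" by (rule th_hom)
  let ?g = "inv_into car th"
  have gth: "?g (th a) = a" if "a \<in> car" for a using inv_into_f_f[OF th_inj_on that] .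
  show "\<forall>a\<in>hcarrier A. ?g (th a) = a" using gth by blast
  show "\<forall>b\<in>hcarrier (clpup (pf A)). th (?g b) = b" unfolding clpup_pf
    by (auto simp: f_inv_into_f)
  show "cha_hom (clpup (pf A)) A ?g"
    unfolding cha_hom_def clpup_pf
  proof (intro conjI ballI)
    show "?g \<in> th ` car \<rightarrow> car" by (auto simp: gth)
    show "?g PF = tp" using gth[OF tp_in] th_tp by simp
    show "?g {} = bt" using gth[OF bt_in] th_bt by simp
    fix U V assume U: "U \<in> th ` car" and V: "V \<in> th ` car"
    then obtain a b where ab: "a \<in> car" "b \<in> car" "U = th a" "V = th b" by blast
    show "?g (U \<inter> V) = mt (?g U) (?g V)" using ab th_mt[OF ab(1,2)] gth by (metis mt_in)
    show "?g (U \<union> V) = jn (?g U) (?g V)" using ab th_jn[OF ab(1,2)] gth by (metis jn_in)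
    show "?g (PF - down (pf A) (U - V)) = im (?g U) (?g V)" using ab th_im[OF ab(1,2)] gth by (metis im_in)
    show "?g (ccond (pf A) U V) = cnd (?g U) (?g V)" using ab ccond_pf[OF ab(1,2)] gth by (metis cnd_in)
  qed
qed

end


locale CHA_hom = A: CHA A + B: CHA B for A :: "'a cha_sig" and B :: "'b cha_sig" +
  fixes h :: "'a \<Rightarrow> 'b"
  assumes hom: "cha_hom A B h"
begin

lemma h_in[simp]: "a \<in> A.car \<Longrightarrow> h a \<in> B.car"
  using hom unfolding cha_hom_def by blast

lemma h_tp: "h A.tp = B.tp" and h_bt: "h A.bt = B.bt"
  using hom unfolding cha_hom_def by blast+

lemma h_ops: assumes "a \<in> A.car" "b \<in> A.car"
  shows "h (A.mt a b) = B.mt (h a) (h b)" "h (A.jn a b) = B.jn (h a) (h b)"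
    "h (A.im a b) = B.im (h a) (h b)" "h (A.cnd a b) = B.cnd (h a) (h b)"
  using hom assms unfolding cha_hom_def by blast+

lemma h_le: "a \<in> A.car \<Longrightarrow> b \<in> A.car \<Longrightarrow> A.le a b \<Longrightarrow> B.le (h a) (h b)"
  using h_ops(1) by (metis hle_def)

abbreviation "pfm \<equiv> pf_mor A h"

lemma pfm_mem: "a \<in> pfm q \<longleftrightarrow> a \<in> A.car \<and> h a \<in> q"
  by (simp add: pf_mor_def)

lemma pfm_prime: assumes q: "prime_filter B q" shows "prime_filter A (pfm q)"
  unfolding prime_filter_def
proof (intro conjI ballI impI)
  show "pfm q \<subseteq> A.car" by (auto simp: pfm_mem)
  show "A.tp \<in> pfm q" using B.pfD(2)[OF q] by (simp add: pfm_mem h_tp)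
  show "A.bt \<notin> pfm q" using B.pfD(3)[OF q] by (simp add: pfm_mem h_bt)
next
  fix a b assume a: "a \<in> pfm q" and b: "b \<in> A.car" and ab: "A.le a b"
  have "B.le (h a) (h b)" using h_le[OF _ b ab] a by (simp add: pfm_mem)
  hence "h b \<in> q" using B.pfD(4)[OF q, of "h a" "h b"] a b by (simp add: pfm_mem)
  thus "b \<in> pfm q" using b by (simp add: pfm_mem)
next
  fix a b assume a: "a \<in> pfm q" and b: "b \<in> pfm q"
  have "h (A.mt a b) \<in> q" using h_ops(1) a b B.pfD(5)[OF q] by (simp add: pfm_mem)
  thus "A.mt a b \<in> pfm q" using a b by (simp add: pfm_mem)
next
  fix a b assume a: "a \<in> A.car" and b: "b \<in> A.car" and ab: "A.jn a b \<in> pfm q"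
  have "B.jn (h a) (h b) \<in> q" using ab h_ops(2)[OF a b] by (simp add: pfm_mem)
  hence "h a \<in> q \<or> h b \<in> q" using B.pfD(6)[OF q] a b by simp
  thus "a \<in> pfm q \<or> b \<in> pfm q" using a b by (simp add: pfm_mem)
qed

lemma pfm_th: assumes a: "a \<in> A.car"
  shows "{q \<in> B.PF. pfm q \<in> A.th a} = B.th (h a)"
proof
  show "{q \<in> B.PF. pfm q \<in> A.th a} \<subseteq> B.th (h a)"
    by (auto simp: A.th_mem B.th_mem B.PF_mem pfm_mem)
  show "B.th (h a) \<subseteq> {q \<in> B.PF. pfm q \<in> A.th a}"
    using pfm_prime a by (auto simp: A.th_mem B.th_mem B.PF_mem pfm_mem)
qed

lemma pfm_cth: assumes a: "a \<in> A.car"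
  shows "{q \<in> B.PF. pfm q \<in> A.PF - A.th a} = B.PF - B.th (h a)"
  using pfm_th[OF a] pfm_prime by (auto simp: A.PF_mem B.PF_mem)

definition "Iz z' = {c \<in> B.car. \<exists>e\<in>A.car. e \<notin> z' \<and> B.le c (h e)}"

lemma Iz_idl: assumes z: "prime_filter A z'" shows "B.idl (Iz z')"
proof (rule B.idlI)
  show "Iz z' \<subseteq> B.car" unfolding Iz_def by blast
  have "B.le B.bt (h A.bt)" using h_bt B.le_refl by simp
  thus "B.bt \<in> Iz z'" unfolding Iz_def using A.pfD(3)[OF z] A.bt_in B.bt_in by blast
next
  fix a b assume a: "a \<in> Iz z'" and b: "b \<in> B.car" and ba: "B.le b a"
  then obtain e where e: "e \<in> A.car" "e \<notin> z'" "B.le a (h e)" "a \<in> B.car" unfolding Iz_def by blast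
  have "B.le b (h e)" using B.le_trans[OF b e(4) h_in[OF e(1)] ba e(3)] .
  thus "b \<in> Iz z'" unfolding Iz_def using e b by blast
next
  fix a b assume a: "a \<in> Iz z'" and b: "b \<in> Iz z'"
  obtain e where e: "e \<in> A.car" "e \<notin> z'" "B.le a (h e)" "a \<in> B.car" using a unfolding Iz_def by blast
  obtain f where f: "f \<in> A.car" "f \<notin> z'" "B.le b (h f)" "b \<in> B.car" using b unfolding Iz_def by blast
  have "B.le (B.jn a b) (B.jn (h e) (h f))" using B.jn_mono e f by simp
  hence "B.le (B.jn a b) (h (A.jn e f))" using h_ops(2)[OF e(1) f(1)] by simp
  moreover have "A.jn e f \<notin> z'" using A.pf_jn_iff[OF z e(1) f(1)] e f by simp
  ultimately show "B.jn a b \<in> Iz z'" unfolding Iz_def using e f A.jn_in B.jn_in by blast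
qed

lemma Iz_h: assumes z: "prime_filter A z'" and d: "d \<in> A.car" "d \<notin> z'" shows "h d \<in> Iz z'"
  unfolding Iz_def using d B.le_refl h_in by blast

lemma pfm_sub_Iz: assumes z: "prime_filter A z'" and Z: "Z \<inter> Iz z' = {}" shows "pfm Z \<subseteq> z'"
proof
  fix d assume "d \<in> pfm Z"
  hence d: "d \<in> A.car" "h d \<in> Z" by (auto simp: pfm_mem)
  show "d \<in> z'"
  proof (rule ccontr)
    assume "d \<notin> z'"
    hence "h d \<in> Iz z'" using Iz_h[OF z d(1)] by blast
    thus False using d Z by blast
  qed
qed

lemma pfm_bounded:
  assumes x: "prime_filter B x" and z: "prime_filter A z'" and sub: "pfm x \<subseteq> z'"
  shows "\<exists>w. prime_filter B w \<and> x \<subseteq> w \<and> pfm w = z'"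
proof -
  define F where "F = {c \<in> B.car. \<exists>q\<in>x. \<exists>d\<in>z'. B.le (B.mt q (h d)) c}"
  have xc: "x \<subseteq> B.car" using B.pfD(1)[OF x] .
  have zc: "z' \<subseteq> A.car" using A.pfD(1)[OF z] .
  have Fin: "c \<in> F" if "c \<in> B.car" "q \<in> x" "d \<in> z'" "B.le (B.mt q (h d)) c" for c q d
    unfolding F_def using that by blast
  have xF: "q \<in> F" if "q \<in> x" for q
  proof -
    have "q \<in> B.car" using that xc by blast
    hence "B.le (B.mt q (h A.tp)) q" using h_tp B.mt_le1 by simp
    thus ?thesis using Fin[OF _ that A.pfD(2)[OF z]] \<open>q \<in> B.car\<close> by blast
  qed
  have zF: "h d \<in> F" if "d \<in> z'" for d
  proof -
    have "d \<in> A.car" using that zc by blast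
    hence "B.le (B.mt B.tp (h d)) (h d)" using B.mt_le2 by simp
    thus ?thesis using Fin[OF _ B.pfD(2)[OF x] that] \<open>d \<in> A.car\<close> by simp
  qed
  have Ff: "B.filt F"
  proof (rule B.filtI)
    show "F \<subseteq> B.car" unfolding F_def by blast
    show "B.tp \<in> F" using xF B.pfD(2)[OF x] by blast
  next
    fix a b assume a: "a \<in> F" and b: "b \<in> B.car" and ab: "B.le a b"
    then obtain q d where qd: "q \<in> x" "d \<in> z'" "B.le (B.mt q (h d)) a" "a \<in> B.car" unfolding F_def by blast
    have "q \<in> B.car" "d \<in> A.car" using qd xc zc by blast+
    hence "B.le (B.mt q (h d)) b" using B.le_trans[OF _ qd(4) b qd(3) ab] by simp
    thus "b \<in> F" using Fin[OF b qd(1,2)] by blast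
  next
    fix a b assume a: "a \<in> F" and b: "b \<in> F"
    obtain q d where qd: "q \<in> x" "d \<in> z'" "B.le (B.mt q (h d)) a" "a \<in> B.car" using a unfolding F_def by blast
    obtain r e where re: "r \<in> x" "e \<in> z'" "B.le (B.mt r (h e)) b" "b \<in> B.car" using b unfolding F_def by blast
    have c: "q \<in> B.car" "d \<in> A.car" "r \<in> B.car" "e \<in> A.car" using qd re xc zc by blast+
    let ?m = "B.mt (B.mt q r) (h (A.mt d e))"
    have hm: "h (A.mt d e) = B.mt (h d) (h e)" using h_ops(1) c by simp
    have "B.le ?m (B.mt q (h d))"
      unfolding hm using c by (intro B.mt_mono) (simp_all add: B.mt_le1)
    hence 1: "B.le ?m a" using B.le_trans[OF _ _ qd(4) _ qd(3)] c by simp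
    have "B.le ?m (B.mt r (h e))"
      unfolding hm using c by (intro B.mt_mono) (simp_all add: B.mt_le2)
    hence 2: "B.le ?m b" using B.le_trans[OF _ _ re(4) _ re(3)] c by simp
    have "B.le ?m (B.mt a b)" using 1 2 c qd(4) re(4) B.le_mt_iff by simp
    moreover have "B.mt q r \<in> x" using B.pfD(5)[OF x qd(1) re(1)] .
    moreover have "A.mt d e \<in> z'" using A.pfD(5)[OF z qd(2) re(2)] .
    ultimately show "B.mt a b \<in> F" using Fin qd(4) re(4) B.mt_in by blast
  qed
  have disj: "F \<inter> Iz z' = {}"
  proof (rule ccontr)
    assume "F \<inter> Iz z' \<noteq> {}"
    then obtain c where c1: "c \<in> F" "c \<in> Iz z'" by blast
    obtain q d where qd: "q \<in> x" "d \<in> z'" "B.le (B.mt q (h d)) c" "c \<in> B.car" using c1(1) unfolding F_def by blast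
    obtain e where e: "e \<in> A.car" "e \<notin> z'" "B.le c (h e)" using c1(2) unfolding Iz_def by blast
    have cc: "q \<in> B.car" "d \<in> A.car" using qd xc zc by blast+
    have "B.le (B.mt q (h d)) (h e)" using B.le_trans[OF _ qd(4) _ qd(3) e(3)] cc e by simp
    hence "B.le q (B.im (h d) (h e))" using B.im_adj cc e by simp
    hence "B.le q (h (A.im d e))" using h_ops(3) cc e by simp
    hence "h (A.im d e) \<in> x" using B.pfD(4)[OF x qd(1)] cc e by simp
    hence "A.im d e \<in> z'" using sub cc e by (auto simp: pfm_mem)
    hence "e \<in> z'" using A.pf_im[OF z cc(2) e(1) _ qd(2)] by simp
    thus False using e by blast
  qed
  obtain w where w: "prime_filter B w" "F \<subseteq> w" "w \<inter> Iz z' = {}"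
    using B.pft[OF Ff Iz_idl[OF z] disj] by blast
  have "x \<subseteq> w" using xF w(2) by blast
  moreover have "pfm w = z'"
  proof
    show "pfm w \<subseteq> z'" using pfm_sub_Iz[OF z w(3)] .
    show "z' \<subseteq> pfm w"
    proof
      fix d assume d: "d \<in> z'"
      have "d \<in> A.car" "h d \<in> w" using zF[OF d] w(2) zc d by blast+
      thus "d \<in> pfm w" by (simp add: pfm_mem)
    qed
  qed
  ultimately show ?thesis using w(1) by blast
qed

lemma pfm_rel1:
  assumes a: "a \<in> A.car" and r: "rel (pf B) (B.th (h a)) x y"
  shows "rel (pf A) (A.th a) (pfm x) (pfm y)"
proof -
  have x: "prime_filter B x" and y: "prime_filter B y" and R: "{b \<in> B.car. B.cnd (h a) b \<in> x} \<subseteq> y"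
    using r B.rel_pf[OF h_in[OF a]] by blast+
  have "{b \<in> A.car. A.cnd a b \<in> pfm x} \<subseteq> pfm y"
  proof
    fix b assume b: "b \<in> {b \<in> A.car. A.cnd a b \<in> pfm x}"
    hence "B.cnd (h a) (h b) \<in> x" using h_ops(4)[OF a] by (auto simp: pfm_mem)
    hence "h b \<in> y" using R b by auto
    thus "b \<in> pfm y" using b by (simp add: pfm_mem)
  qed
  thus ?thesis using A.rel_pf[OF a] pfm_prime[OF x] pfm_prime[OF y] by blast
qed

lemma pfm_rel2:
  assumes a: "a \<in> A.car" and x: "prime_filter B x" and r: "rel (pf A) (A.th a) (pfm x) z'"
  shows "\<exists>w. prime_filter B w \<and> rel (pf B) (B.th (h a)) x w \<and> pfm w \<subseteq> z'"
proof -
  have z: "prime_filter A z'" and R: "{b \<in> A.car. A.cnd a b \<in> pfm x} \<subseteq> z'"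
    using r A.rel_pf[OF a] by blast+
  let ?G = "{c \<in> B.car. B.cnd (h a) c \<in> x}"
  have G: "B.filt ?G" using B.cfilt[OF x h_in[OF a]] .
  have disj: "?G \<inter> Iz z' = {}"
  proof (rule ccontr)
    assume "?G \<inter> Iz z' \<noteq> {}"
    then obtain c where c1: "c \<in> ?G" "c \<in> Iz z'" by blast
    obtain e where e: "e \<in> A.car" "e \<notin> z'" "B.le c (h e)" using c1(2) unfolding Iz_def by blast
    have "B.le (B.cnd (h a) c) (B.cnd (h a) (h e))" using B.cnd_mono[OF h_in[OF a] _ h_in[OF e(1)] e(3)] c1 by blast
    hence "B.le (B.cnd (h a) c) (h (A.cnd a e))" using h_ops(4)[OF a e(1)] by simp
    hence "h (A.cnd a e) \<in> x" using B.pfD(4)[OF x, of "B.cnd (h a) c"] c1 a e by simp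
    hence "e \<in> z'" using R e a by (auto simp: pfm_mem)
    thus False using e by blast
  qed
  obtain w where w: "prime_filter B w" "?G \<subseteq> w" "w \<inter> Iz z' = {}"
    using B.pft[OF G Iz_idl[OF z] disj] by blast
  have "rel (pf B) (B.th (h a)) x w" using B.rel_pf[OF h_in[OF a]] x w by blast
  moreover have "pfm w \<subseteq> z'" using pfm_sub_Iz[OF z w(3)] .
  ultimately show ?thesis using w(1) by blast
qed

lemma pfm_cont: "continuous_map (topo (pf B)) (topo (pf A)) pfm"
proof -
  have "continuous_map (topo (pf B)) (topology_generated_by A.Sb) pfm"
  proof (rule continuous_on_generated_topo)
    fix U assume "U \<in> A.Sb"
    then consider a where "a \<in> A.car" "U = A.th a" | a where "a \<in> A.car" "U = A.PF - A.th a"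
      unfolding A.Sb_def by blast
    thus "openin (topo (pf B)) (pfm -` U \<inter> topspace (topo (pf B)))"
    proof cases
      case 1
      have "pfm -` U \<inter> topspace (topo (pf B)) = {q \<in> B.PF. pfm q \<in> A.th a}"
        unfolding 1 B.topspace_PT by blast
      thus ?thesis using pfm_th[OF 1(1)] B.open_th[OF h_in[OF 1(1)]] by simp
    next
      case 2
      have "pfm -` U \<inter> topspace (topo (pf B)) = {q \<in> B.PF. pfm q \<in> A.PF - A.th a}"
        unfolding 2 B.topspace_PT by blast
      thus ?thesis using pfm_cth[OF 2(1)] B.open_cth[OF h_in[OF 2(1)]] by simp
    qed
  next
    have "\<Union>A.Sb = A.PF" using A.topspace_PT by (simp add: A.pf_simps)
    thus "pfm ` topspace (topo (pf B)) \<subseteq> \<Union>A.Sb"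
      using pfm_prime unfolding B.topspace_PT by (auto simp: A.PF_mem B.PF_mem)
  qed
  thus ?thesis by (simp add: A.pf_simps)
qed

lemma pfm_morph: "ces_morph (pf B) (pf A) pfm"
  unfolding ces_morph_def
proof (intro conjI)
  show "pfm \<in> pts (pf B) \<rightarrow> pts (pf A)" using pfm_prime by (auto simp: A.pf_simps B.pf_simps A.PF_mem B.PF_mem)
  show "continuous_map (topo (pf B)) (topo (pf A)) pfm" by (rule pfm_cont)
  show "\<forall>x\<in>pts (pf B). \<forall>y\<in>pts (pf B). leq (pf B) x y \<longrightarrow> leq (pf A) (pfm x) (pfm y)"
    by (auto simp: A.pf_simps B.pf_simps pfm_mem)
  show "\<forall>x\<in>pts (pf B). \<forall>z'\<in>pts (pf A). leq (pf A) (pfm x) z' \<longrightarrow> (\<exists>z\<in>pts (pf B). leq (pf B) x z \<and> pfm z = z')"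
  proof (intro ballI impI)
    fix x z' assume "x \<in> pts (pf B)" "z' \<in> pts (pf A)" "leq (pf A) (pfm x) z'"
    hence "prime_filter B x" "prime_filter A z'" "pfm x \<subseteq> z'" by (simp_all add: A.pf_simps B.pf_simps A.PF_mem B.PF_mem)
    then obtain w where "prime_filter B w" "x \<subseteq> w" "pfm w = z'" using pfm_bounded by blast
    thus "\<exists>z\<in>pts (pf B). leq (pf B) x z \<and> pfm z = z'" by (auto simp: B.pf_simps B.PF_mem)
  qed
  show "\<forall>a'\<in>clopen_upsets (pf A).
       (\<forall>x\<in>pts (pf B). \<forall>y\<in>pts (pf B). rel (pf B) {u \<in> pts (pf B). pfm u \<in> a'} x y \<longrightarrow> rel (pf A) a' (pfm x) (pfm y)) \<and>
       (\<forall>x\<in>pts (pf B). \<forall>z'\<in>pts (pf A). rel (pf A) a' (pfm x) z' \<longrightarrow>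
           (\<exists>z\<in>pts (pf B). rel (pf B) {u \<in> pts (pf B). pfm u \<in> a'} x z \<and> leq (pf A) (pfm z) z'))"
  proof (rule ballI)
    fix a' assume "a' \<in> clopen_upsets (pf A)"
    then obtain a where a: "a \<in> A.car" "a' = A.th a" unfolding A.clopen_upsets_pf by blast
    have pre: "{u \<in> pts (pf B). pfm u \<in> A.th a} = B.th (h a)" using pfm_th[OF a(1)] by (simp add: B.pf_simps)
    have 1: "\<forall>x\<in>pts (pf B). \<forall>y\<in>pts (pf B). rel (pf B) {u \<in> pts (pf B). pfm u \<in> a'} x y \<longrightarrow> rel (pf A) a' (pfm x) (pfm y)"
      unfolding a(2) pre using pfm_rel1[OF a(1)] by blast
    have 2: "\<forall>x\<in>pts (pf B). \<forall>z'\<in>pts (pf A). rel (pf A) a' (pfm x) z' \<longrightarrow>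
           (\<exists>z\<in>pts (pf B). rel (pf B) {u \<in> pts (pf B). pfm u \<in> a'} x z \<and> leq (pf A) (pfm z) z')"
    proof (intro ballI impI)
      fix x z' assume x: "x \<in> pts (pf B)" and z: "z' \<in> pts (pf A)" and r: "rel (pf A) a' (pfm x) z'"
      have px: "prime_filter B x" using x by (simp add: B.pf_simps B.PF_mem)
      obtain w where "prime_filter B w" "rel (pf B) (B.th (h a)) x w" "pfm w \<subseteq> z'"
        using pfm_rel2[OF a(1) px] r a(2) by blast
      thus "\<exists>z\<in>pts (pf B). rel (pf B) {u \<in> pts (pf B). pfm u \<in> a'} x z \<and> leq (pf A) (pfm z) z'"
        unfolding a(2) pre by (auto simp: B.pf_simps A.pf_simps B.PF_mem)
    qed
    show "(\<forall>x\<in>pts (pf B). \<forall>y\<in>pts (pf B). rel (pf B) {u \<in> pts (pf B). pfm u \<in> a'} x y \<longrightarrow> rel (pf A) a' (pfm x) (pfm y)) \<and>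
       (\<forall>x\<in>pts (pf B). \<forall>z'\<in>pts (pf A). rel (pf A) a' (pfm x) z' \<longrightarrow>
           (\<exists>z\<in>pts (pf B). rel (pf B) {u \<in> pts (pf B). pfm u \<in> a'} x z \<and> leq (pf A) (pfm z) z'))"
      using 1 2 by (rule conjI)
  qed
qed

lemma natural_th: "a \<in> A.car \<Longrightarrow> clpup_mor (pf B) pfm (A.th a) = B.th (h a)"
  using pfm_th by (simp add: clpup_mor_def B.pf_simps)

end


locale CES =
  fixes X :: "'x ces_sig"
  assumes cesX: "ces X"
begin

abbreviation "Pt \<equiv> pts X"
abbreviation "lq \<equiv> leq X"
abbreviation "Tx \<equiv> topo X"
abbreviation "CU \<equiv> clopen_upsets X"

lemma esX: "esakia_space X" using cesX unfolding ces_def by blast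

lemma topspace_X: "topspace Tx = Pt" using esX unfolding esakia_space_def by blast
lemma Pt_ne: "Pt \<noteq> {}" using esX unfolding esakia_space_def by blast
lemma lq_refl: "x \<in> Pt \<Longrightarrow> lq x x" using esX unfolding esakia_space_def by blast
lemma lq_antisym: "x \<in> Pt \<Longrightarrow> y \<in> Pt \<Longrightarrow> lq x y \<Longrightarrow> lq y x \<Longrightarrow> x = y"
  using esX unfolding esakia_space_def by blast
lemma lq_trans: "x \<in> Pt \<Longrightarrow> y \<in> Pt \<Longrightarrow> z \<in> Pt \<Longrightarrow> lq x y \<Longrightarrow> lq y z \<Longrightarrow> lq x z"
  using esX unfolding esakia_space_def by blast
lemma compactX: "compact_space Tx" using esX unfolding esakia_space_def by blast
lemma sepX: "x \<in> Pt \<Longrightarrow> y \<in> Pt \<Longrightarrow> \<not> lq x y \<Longrightarrow> \<exists>U\<in>CU. x \<in> U \<and> y \<notin> U"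
  using esX unfolding esakia_space_def by blast
lemma downX: "is_clopen X U \<Longrightarrow> is_clopen X (down X U)"
  using esX unfolding esakia_space_def by blast

lemma ces_rel: assumes "a \<in> CU"
  shows "\<And>x y. rel X a x y \<Longrightarrow> x \<in> Pt \<and> y \<in> Pt"
    "\<And>b. b \<in> CU \<Longrightarrow> is_clopen X (ccond X a b)"
    "\<And>x y. x \<in> Pt \<Longrightarrow> y \<in> Pt \<Longrightarrow> (\<exists>x'\<in>Pt. \<exists>y'\<in>Pt. lq x x' \<and> rel X a x' y' \<and> lq y' y) \<longleftrightarrow> rel X a x y"
    "\<And>x. x \<in> Pt \<Longrightarrow> closedin Tx {y. rel X a x y}"
  using cesX assms unfolding ces_def by blast+

lemma rel_mono: assumes a: "a \<in> CU" and xy: "x \<in> Pt" "y \<in> Pt" and le: "lq x y" and r: "rel X a y z"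
  shows "rel X a x z"
proof -
  have z: "z \<in> Pt" using ces_rel(1)[OF a r] by blast
  have "\<exists>x'\<in>Pt. \<exists>y'\<in>Pt. lq x x' \<and> rel X a x' y' \<and> lq y' z" using xy z le r lq_refl by blast
  thus ?thesis using ces_rel(3)[OF a xy(1) z] by blast
qed

lemma rel_mono2: assumes a: "a \<in> CU" and x: "x \<in> Pt" and r: "rel X a x z" and zw: "lq z w" and w: "w \<in> Pt"
  shows "rel X a x w"
proof -
  have z: "z \<in> Pt" using ces_rel(1)[OF a r] by blast
  have "\<exists>x'\<in>Pt. \<exists>y'\<in>Pt. lq x x' \<and> rel X a x' y' \<and> lq y' w" using x z zw r lq_refl by blast
  thus ?thesis using ces_rel(3)[OF a x w] by blast
qed

lemma CU_mem: "a \<in> CU \<longleftrightarrow> openin Tx a \<and> closedin Tx a \<and> a \<subseteq> Pt \<and> (\<forall>x\<in>a. \<forall>y\<in>Pt. lq x y \<longrightarrow> y \<in> a)"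
  unfolding clopen_upsets_def is_clopen_def is_upset_def by blast

lemma CU_sub: "a \<in> CU \<Longrightarrow> a \<subseteq> Pt" using CU_mem by blast
lemma CU_up: "a \<in> CU \<Longrightarrow> x \<in> a \<Longrightarrow> y \<in> Pt \<Longrightarrow> lq x y \<Longrightarrow> y \<in> a" using CU_mem by blast
lemma CU_open: "a \<in> CU \<Longrightarrow> openin Tx a" using CU_mem by blast
lemma CU_closed: "a \<in> CU \<Longrightarrow> closedin Tx a" using CU_mem by blast

lemma CU_int: "a \<in> CU \<Longrightarrow> b \<in> CU \<Longrightarrow> a \<inter> b \<in> CU"
  unfolding CU_mem by blast
lemma CU_un: "a \<in> CU \<Longrightarrow> b \<in> CU \<Longrightarrow> a \<union> b \<in> CU"
  unfolding CU_mem by blast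
lemma CU_Pt: "Pt \<in> CU"
  unfolding CU_mem using topspace_X by (metis closedin_topspace openin_topspace order_refl)
lemma CU_empty: "{} \<in> CU"
  unfolding CU_mem by simp

lemma CU_imp: assumes a: "a \<in> CU" and b: "b \<in> CU" shows "Pt - down X (a - b) \<in> CU"
proof -
  have "is_clopen X (a - b)" unfolding is_clopen_def
    using openin_diff[OF CU_open[OF a] CU_closed[OF b]] closedin_diff[OF CU_closed[OF a] CU_open[OF b]] by blast
  hence D: "openin Tx (down X (a - b))" "closedin Tx (down X (a - b))" using downX unfolding is_clopen_def by blast+
  have o: "openin Tx (Pt - down X (a - b))" using openin_diff[OF openin_topspace D(2)] topspace_X by simp
  have c: "closedin Tx (Pt - down X (a - b))" using closedin_diff[OF closedin_topspace D(1)] topspace_X by simp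
  have up: "y \<in> Pt - down X (a - b)" if x: "x \<in> Pt - down X (a - b)" and y: "y \<in> Pt" and xy: "lq x y" for x y
  proof (rule ccontr)
    assume "y \<notin> Pt - down X (a - b)"
    then obtain z where z: "z \<in> a - b" "lq y z" using y unfolding down_def by blast
    have "z \<in> Pt" using z CU_sub[OF a] by blast
    hence "lq x z" using lq_trans[OF _ y _ xy z(2)] x by blast
    hence "x \<in> down X (a - b)" unfolding down_def using x z by blast
    thus False using x by blast
  qed
  show ?thesis unfolding CU_mem using o c up by blast
qed

lemma CU_ccond: assumes a: "a \<in> CU" and b: "b \<in> CU" shows "ccond X a b \<in> CU"
proof -
  have cl: "is_clopen X (ccond X a b)" using ces_rel(2)[OF a b] .
  have up: "y \<in> ccond X a b" if x: "x \<in> ccond X a b" and y: "y \<in> Pt" and xy: "lq x y" for x y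
  proof -
    have xP: "x \<in> Pt" and Rx: "{z. rel X a x z} \<subseteq> b" using x unfolding ccond_def by blast+
    have "{z. rel X a y z} \<subseteq> {z. rel X a x z}" using rel_mono[OF a xP y xy] by blast
    thus ?thesis using Rx y unfolding ccond_def by blast
  qed
  show ?thesis unfolding CU_mem using cl up unfolding is_clopen_def ccond_def by blast
qed

lemma clpup_simps: "hcarrier (clpup X) = CU" "htop (clpup X) = Pt" "hbot (clpup X) = {}"
  "hmeet (clpup X) = (\<inter>)" "hjoin (clpup X) = (\<union>)" "himp (clpup X) = (\<lambda>a b. Pt - down X (a - b))"
  "hcond (clpup X) = ccond X"
  by (simp_all add: clpup_def)

lemma hle_clpup: "hle (clpup X) a b \<longleftrightarrow> a \<inter> b = a"
  by (simp add: hle_def clpup_simps)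

lemma heyting_clpup: "heyting_algebra (clpup X)"
  unfolding heyting_algebra_def clpup_simps hle_clpup
proof (intro conjI ballI)
  show "Pt \<in> CU" by (rule CU_Pt)
  show "{} \<in> CU" by (rule CU_empty)
  show "Pt \<noteq> {}" by (rule Pt_ne)
  fix a b assume a: "a \<in> CU" and b: "b \<in> CU"
  show "a \<inter> b \<in> CU" using CU_int[OF a b] .
  show "a \<union> b \<in> CU" using CU_un[OF a b] .
  show "Pt - down X (a - b) \<in> CU" using CU_imp[OF a b] .
  show "a \<inter> b = b \<inter> a" by blast
  show "a \<union> b = b \<union> a" by blast
  show "a \<inter> (a \<union> b) = a" by blast
  show "a \<union> a \<inter> b = a" by blast
next
  fix a b c assume a: "a \<in> CU" and b: "b \<in> CU" and c: "c \<in> CU"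
  show "a \<inter> (b \<inter> c) = a \<inter> b \<inter> c" by blast
  show "a \<union> (b \<union> c) = a \<union> b \<union> c" by blast
  show "(c \<inter> (Pt - down X (a - b)) = c) = (c \<inter> a \<inter> b = c \<inter> a)"
  proof
    assume H: "c \<inter> (Pt - down X (a - b)) = c"
    show "c \<inter> a \<inter> b = c \<inter> a"
    proof (rule ccontr)
      assume "c \<inter> a \<inter> b \<noteq> c \<inter> a"
      then obtain x where x: "x \<in> c" "x \<in> a" "x \<notin> b" by blast
      have "x \<in> Pt" using x CU_sub[OF a] by blast
      hence "x \<in> down X (a - b)" unfolding down_def using x lq_refl by blast
      thus False using H x by blast
    qed
  next
    assume H: "c \<inter> a \<inter> b = c \<inter> a"
    have "x \<notin> down X (a - b)" if x: "x \<in> c" for x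
    proof
      assume "x \<in> down X (a - b)"
      then obtain z where z: "z \<in> a - b" "lq x z" "x \<in> Pt" unfolding down_def by blast
      have "z \<in> c" using CU_up[OF c x] z CU_sub[OF a] by blast
      thus False using H z by blast
    qed
    thus "c \<inter> (Pt - down X (a - b)) = c" using CU_sub[OF c] by blast
  qed
next
  fix a assume a: "a \<in> CU"
  show "{} \<inter> a = {}" by blast
  show "a \<inter> Pt = a" using CU_sub[OF a] by blast
qed

lemma cha_clpup: "cha (clpup X)"
  unfolding cha_def
proof (intro conjI ballI)
  show "heyting_algebra (clpup X)" by (rule heyting_clpup)
  fix a b assume a: "a \<in> hcarrier (clpup X)" and b: "b \<in> hcarrier (clpup X)"
  show "hcond (clpup X) a b \<in> hcarrier (clpup X)" using CU_ccond a b by (simp add: clpup_simps)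
  fix c assume c: "c \<in> hcarrier (clpup X)"
  show "hcond (clpup X) a (hmeet (clpup X) b c) = hmeet (clpup X) (hcond (clpup X) a b) (hcond (clpup X) a c)"
    unfolding clpup_simps ccond_def by blast
next
  fix a assume a: "a \<in> hcarrier (clpup X)"
  show "hcond (clpup X) a (htop (clpup X)) = htop (clpup X)"
    using ces_rel(1) a unfolding clpup_simps ccond_def by blast
qed

end

sublocale CES \<subseteq> C: CHA "clpup X"
  by unfold_locales (simp_all add: heyting_clpup cha_clpup)


locale CES_morph = X: CES X + Y: CES Y for X :: "'x ces_sig" and Y :: "'y ces_sig" +
  fixes f :: "'x \<Rightarrow> 'y"
  assumes mor: "ces_morph X Y f"
begin

lemma f_in: "x \<in> X.Pt \<Longrightarrow> f x \<in> Y.Pt" using mor unfolding ces_morph_def by blast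
lemma f_cont: "continuous_map X.Tx Y.Tx f" using mor unfolding ces_morph_def by blast
lemma f_mono: "x \<in> X.Pt \<Longrightarrow> y \<in> X.Pt \<Longrightarrow> X.lq x y \<Longrightarrow> Y.lq (f x) (f y)"
  using mor unfolding ces_morph_def by blast
lemma f_bnd: "x \<in> X.Pt \<Longrightarrow> z' \<in> Y.Pt \<Longrightarrow> Y.lq (f x) z' \<Longrightarrow> \<exists>z\<in>X.Pt. X.lq x z \<and> f z = z'"
  using mor unfolding ces_morph_def by blast
lemma f_rel1: "a' \<in> Y.CU \<Longrightarrow> x \<in> X.Pt \<Longrightarrow> y \<in> X.Pt \<Longrightarrow> rel X {u \<in> X.Pt. f u \<in> a'} x y \<Longrightarrow> rel Y a' (f x) (f y)"
  using mor unfolding ces_morph_def by blast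
lemma f_rel2: "a' \<in> Y.CU \<Longrightarrow> x \<in> X.Pt \<Longrightarrow> z' \<in> Y.Pt \<Longrightarrow> rel Y a' (f x) z' \<Longrightarrow>
   \<exists>z\<in>X.Pt. rel X {u \<in> X.Pt. f u \<in> a'} x z \<and> Y.lq (f z) z'"
  using mor unfolding ces_morph_def by blast

abbreviation "pre \<equiv> clpup_mor X f"

lemma pre_eq: "pre a = {u \<in> X.Pt. f u \<in> a}" by (simp add: clpup_mor_def)

lemma pre_CU: assumes a: "a \<in> Y.CU" shows "pre a \<in> X.CU"
proof -
  have o: "openin X.Tx (pre a)"
    using openin_continuous_map_preimage[OF f_cont Y.CU_open[OF a]] by (simp add: pre_eq X.topspace_X)
  have c: "closedin X.Tx (pre a)"
    using closedin_continuous_map_preimage[OF f_cont Y.CU_closed[OF a]] by (simp add: pre_eq X.topspace_X)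
  have up: "y \<in> pre a" if x: "x \<in> pre a" and y: "y \<in> X.Pt" and xy: "X.lq x y" for x y
  proof -
    have xP: "x \<in> X.Pt" "f x \<in> a" using x by (auto simp: pre_eq)
    have "Y.lq (f x) (f y)" using f_mono[OF xP(1) y xy] .
    hence "f y \<in> a" using Y.CU_up[OF a xP(2) f_in[OF y]] by blast
    thus ?thesis using y by (simp add: pre_eq)
  qed
  show ?thesis unfolding X.CU_mem using o c up by (auto simp: pre_eq)
qed

lemma pre_down: assumes a: "a \<in> Y.CU" and b: "b \<in> Y.CU" and x: "x \<in> X.Pt"
  shows "f x \<in> down Y (a - b) \<longleftrightarrow> x \<in> down X (pre a - pre b)"
proof
  assume "f x \<in> down Y (a - b)"
  then obtain z' where z': "z' \<in> a - b" "Y.lq (f x) z'" unfolding down_def by blast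
  have "z' \<in> Y.Pt" using z' Y.CU_sub[OF a] by blast
  then obtain z where z: "z \<in> X.Pt" "X.lq x z" "f z = z'" using f_bnd[OF x _ z'(2)] by blast
  have "z \<in> pre a - pre b" using z z' by (simp add: pre_eq)
  thus "x \<in> down X (pre a - pre b)" unfolding down_def using x z by blast
next
  assume "x \<in> down X (pre a - pre b)"
  then obtain z where z: "z \<in> pre a - pre b" "X.lq x z" unfolding down_def by blast
  have zP: "z \<in> X.Pt" "f z \<in> a" "f z \<notin> b" using z by (auto simp: pre_eq)
  have "Y.lq (f x) (f z)" using f_mono[OF x zP(1) z(2)] .
  thus "f x \<in> down Y (a - b)" unfolding down_def using f_in[OF x] zP by blast
qed

lemma pre_ccond: assumes a: "a \<in> Y.CU" and b: "b \<in> Y.CU"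
  shows "pre (ccond Y a b) = ccond X (pre a) (pre b)"
proof
  show "pre (ccond Y a b) \<subseteq> ccond X (pre a) (pre b)"
  proof
    fix x assume "x \<in> pre (ccond Y a b)"
    hence x: "x \<in> X.Pt" and R: "{y. rel Y a (f x) y} \<subseteq> b" by (auto simp: pre_eq ccond_def)
    have "y \<in> pre b" if r: "rel X (pre a) x y" for y
    proof -
      have y: "y \<in> X.Pt" using X.ces_rel(1)[OF pre_CU[OF a] r] by blast
      have "rel Y a (f x) (f y)" using f_rel1[OF a x y] r by (simp add: pre_eq)
      thus ?thesis using R y by (auto simp: pre_eq)
    qed
    thus "x \<in> ccond X (pre a) (pre b)" using x unfolding ccond_def by blast
  qed
next
  show "ccond X (pre a) (pre b) \<subseteq> pre (ccond Y a b)"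
  proof
    fix x assume "x \<in> ccond X (pre a) (pre b)"
    hence x: "x \<in> X.Pt" and R: "\<And>y. rel X (pre a) x y \<Longrightarrow> y \<in> pre b" unfolding ccond_def by blast+
    have "z' \<in> b" if r: "rel Y a (f x) z'" for z'
    proof -
      have z': "z' \<in> Y.Pt" using Y.ces_rel(1)[OF a r] by blast
      obtain z where z: "z \<in> X.Pt" "rel X {u \<in> X.Pt. f u \<in> a} x z" "Y.lq (f z) z'"
        using f_rel2[OF a x z' r] by blast
      have "z \<in> pre b" using R z(2) by (simp add: pre_eq)
      hence "f z \<in> b" by (simp add: pre_eq)
      thus ?thesis using Y.CU_up[OF b _ z' z(3)] by blast
    qed
    thus "x \<in> pre (ccond Y a b)" using x f_in[OF x] unfolding ccond_def pre_eq by blast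
  qed
qed

lemma pre_hom: "cha_hom (clpup Y) (clpup X) pre"
  unfolding cha_hom_def X.clpup_simps Y.clpup_simps
proof (intro conjI ballI)
  show "pre \<in> Y.CU \<rightarrow> X.CU" using pre_CU by blast
  show "pre Y.Pt = X.Pt" using f_in by (auto simp: pre_eq)
  show "pre {} = {}" by (simp add: pre_eq)
  fix a b assume a: "a \<in> Y.CU" and b: "b \<in> Y.CU"
  show "pre (a \<inter> b) = pre a \<inter> pre b" by (auto simp: pre_eq)
  show "pre (a \<union> b) = pre a \<union> pre b" by (auto simp: pre_eq)
  show "pre (ccond Y a b) = ccond X (pre a) (pre b)" by (rule pre_ccond[OF a b])
  show "pre (Y.Pt - down Y (a - b)) = X.Pt - down X (pre a - pre b)"
    using pre_down[OF a b] f_in by (auto simp: pre_eq)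
qed

end


context CES
begin

abbreviation "ep \<equiv> eps X"

lemma ep_mem: "a \<in> ep x \<longleftrightarrow> a \<in> CU \<and> x \<in> a" by (simp add: eps_def)

lemma pfX: assumes P: "prime_filter (clpup X) P"
  shows "P \<subseteq> CU" "Pt \<in> P" "{} \<notin> P"
    "\<And>a b. a \<in> P \<Longrightarrow> b \<in> CU \<Longrightarrow> a \<subseteq> b \<Longrightarrow> b \<in> P"
    "\<And>a b. a \<in> P \<Longrightarrow> b \<in> P \<Longrightarrow> a \<inter> b \<in> P"
    "\<And>a b. a \<in> CU \<Longrightarrow> b \<in> CU \<Longrightarrow> a \<union> b \<in> P \<Longrightarrow> a \<in> P \<or> b \<in> P"
proof -
  note D = C.pfD[OF P, unfolded clpup_simps hle_clpup]
  show "P \<subseteq> CU" "Pt \<in> P" "{} \<notin> P" using D(1-3) .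
  show "\<And>a b. a \<in> P \<Longrightarrow> b \<in> P \<Longrightarrow> a \<inter> b \<in> P" using D(5) .
  show "\<And>a b. a \<in> CU \<Longrightarrow> b \<in> CU \<Longrightarrow> a \<union> b \<in> P \<Longrightarrow> a \<in> P \<or> b \<in> P" using D(6) .
  fix a b assume "a \<in> P" "b \<in> CU" "a \<subseteq> b"
  moreover have "a \<inter> b = a" using \<open>a \<subseteq> b\<close> by blast
  ultimately show "b \<in> P" using D(4) by blast
qed

lemma ep_prime: assumes x: "x \<in> Pt" shows "prime_filter (clpup X) (ep x)"
  unfolding prime_filter_def clpup_simps hle_clpup
proof (intro conjI ballI impI)
  show "ep x \<subseteq> CU" by (auto simp: ep_mem)
  show "Pt \<in> ep x" using CU_Pt x by (simp add: ep_mem)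
  show "{} \<notin> ep x" by (simp add: ep_mem)
  fix a b assume a: "a \<in> ep x" and b: "b \<in> CU" and ab: "a \<inter> b = a"
  show "b \<in> ep x" using a b ab by (auto simp: ep_mem)
next
  fix a b assume a: "a \<in> ep x" and b: "b \<in> ep x"
  show "a \<inter> b \<in> ep x" using a b CU_int by (simp add: ep_mem)
next
  fix a b assume a: "a \<in> CU" and b: "b \<in> CU" and ab: "a \<union> b \<in> ep x"
  show "a \<in> ep x \<or> b \<in> ep x" using a b ab by (auto simp: ep_mem)
qed

lemma ep_PF: "x \<in> Pt \<Longrightarrow> ep x \<in> C.PF" using ep_prime by (simp add: C.PF_mem)

lemma ep_le: assumes x: "x \<in> Pt" and y: "y \<in> Pt" shows "ep x \<subseteq> ep y \<longleftrightarrow> lq x y"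
proof
  assume H: "ep x \<subseteq> ep y"
  show "lq x y"
  proof (rule ccontr)
    assume "\<not> lq x y"
    then obtain U where "U \<in> CU" "x \<in> U" "y \<notin> U" using sepX[OF x y] by blast
    thus False using H by (auto simp: ep_mem)
  qed
next
  assume "lq x y"
  thus "ep x \<subseteq> ep y" using CU_up y by (auto simp: ep_mem)
qed

lemma ep_inj: "inj_on ep Pt"
proof (rule inj_onI)
  fix x y assume x: "x \<in> Pt" and y: "y \<in> Pt" and e: "ep x = ep y"
  thus "x = y" using ep_le[OF x y] ep_le[OF y x] lq_antisym[OF x y] by simp
qed

lemma cu_fin_union: "finite S \<Longrightarrow> S \<subseteq> CU \<Longrightarrow> \<Union>S \<in> CU"
  by (induction S rule: finite_induct) (auto intro: CU_un CU_empty)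

lemma pf_fin_inter: assumes P: "prime_filter (clpup X) P" shows "finite S \<Longrightarrow> S \<subseteq> P \<Longrightarrow> Pt \<inter> \<Inter>S \<in> P"
proof (induction S rule: finite_induct)
  case empty
  then show ?case using pfX(2)[OF P] by simp
next
  case (insert x F)
  have "Pt \<inter> \<Inter>(insert x F) = x \<inter> (Pt \<inter> \<Inter>F)" by blast
  then show ?case using insert pfX(5)[OF P] by simp
qed

lemma pf_fin_union: assumes P: "prime_filter (clpup X) P"
  shows "finite S \<Longrightarrow> S \<subseteq> CU \<Longrightarrow> \<Union>S \<in> P \<Longrightarrow> \<exists>s\<in>S. s \<in> P"
proof (induction S rule: finite_induct)
  case empty
  then show ?case using pfX(3)[OF P] by simp
next
  case (insert x F)
  have "x \<in> CU" "\<Union>F \<in> CU" using insert cu_fin_union by auto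
  moreover have "x \<union> \<Union>F \<in> P" using insert by simp
  ultimately have "x \<in> P \<or> \<Union>F \<in> P" using pfX(6)[OF P] by blast
  then show ?case using insert by blast
qed

lemma ep_surj: assumes P: "prime_filter (clpup X) P" shows "\<exists>x\<in>Pt. ep x = P"
proof (rule ccontr)
  assume nex: "\<not> (\<exists>x\<in>Pt. ep x = P)"
  let ?U = "(\<lambda>a. Pt - a) ` P \<union> (CU - P)"
  have PCU: "P \<subseteq> CU" using pfX(1)[OF P] .
  have op: "\<forall>U\<in>?U. openin Tx U"
  proof
    fix U assume "U \<in> ?U"
    then consider a where "a \<in> P" "U = Pt - a" | "U \<in> CU" by blast
    thus "openin Tx U"
    proof cases
      case 1
      have "openin Tx (topspace Tx - a)" using openin_diff[OF openin_topspace CU_closed] 1 PCU by blast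
      thus ?thesis using 1 topspace_X by simp
    next
      case 2 thus ?thesis using CU_open by blast
    qed
  qed
  have cov: "topspace Tx \<subseteq> \<Union>?U"
  proof
    fix x assume "x \<in> topspace Tx"
    hence x: "x \<in> Pt" using topspace_X by simp
    have "ep x \<noteq> P" using nex x by blast
    hence "\<not> P \<subseteq> ep x \<or> \<not> ep x \<subseteq> P" by blast
    thus "x \<in> \<Union>?U"
    proof
      assume "\<not> P \<subseteq> ep x"
      then obtain a where a: "a \<in> P" "a \<notin> ep x" by blast
      hence "x \<notin> a" using PCU by (auto simp: ep_mem)
      hence "x \<in> Pt - a" using x by blast
      thus ?thesis using a(1) by blast
    next
      assume "\<not> ep x \<subseteq> P"
      then obtain b where b: "b \<in> ep x" "b \<notin> P" by blast
      hence "b \<in> CU - P" "x \<in> b" by (auto simp: ep_mem)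
      thus ?thesis by blast
    qed
  qed
  obtain F where F: "finite F" "F \<subseteq> ?U" "topspace Tx \<subseteq> \<Union>F"
    using compactX unfolding compact_space_alt using op cov by meson
  let ?F1 = "F \<inter> (\<lambda>a. Pt - a) ` P"
  let ?F2 = "F \<inter> (CU - P)"
  have "finite ?F1" using F(1) by simp
  then obtain P0 where P0: "P0 \<subseteq> P" "finite P0" "?F1 = (\<lambda>a. Pt - a) ` P0"
    using finite_subset_image[of ?F1 "\<lambda>a. Pt - a" P] by blast
  have mP: "Pt \<inter> \<Inter>P0 \<in> P" using pf_fin_inter[OF P P0(2,1)] .
  have msub: "Pt \<inter> \<Inter>P0 \<subseteq> \<Union>?F2"
  proof
    fix x assume x: "x \<in> Pt \<inter> \<Inter>P0"
    hence "x \<in> \<Union>F" using F(3) topspace_X by blast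
    then obtain S where S: "S \<in> F" "x \<in> S" by blast
    have "S \<notin> ?F1"
    proof
      assume "S \<in> ?F1"
      then obtain a where "a \<in> P0" "S = Pt - a" using P0(3) by blast
      thus False using x S by blast
    qed
    hence "S \<in> ?F2" using S F(2) by blast
    thus "x \<in> \<Union>?F2" using S by blast
  qed
  have F2CU: "?F2 \<subseteq> CU" by blast
  have "\<Union>?F2 \<in> CU" using cu_fin_union[OF _ F2CU] F(1) by simp
  hence "\<Union>?F2 \<in> P" using pfX(4)[OF P mP _ msub] by blast
  then obtain s where "s \<in> ?F2" "s \<in> P" using pf_fin_union[OF P _ F2CU] F(1) by blast
  thus False by blast
qed

lemma ep_th: assumes a: "a \<in> CU" shows "{x \<in> Pt. ep x \<in> C.th a} = a"
  using ep_prime a CU_sub[OF a] by (auto simp: C.th_mem ep_mem)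

lemma ep_cth: assumes a: "a \<in> CU" shows "{x \<in> Pt. ep x \<in> C.PF - C.th a} = Pt - a"
  using ep_prime a CU_sub[OF a] by (auto simp: C.th_mem ep_mem C.PF_mem)

lemma ep_cont: "continuous_map Tx C.PT ep"
proof -
  have "continuous_map Tx (topology_generated_by C.Sb) ep"
  proof (rule continuous_on_generated_topo)
    fix U assume "U \<in> C.Sb"
    then consider a where "a \<in> CU" "U = C.th a" | a where "a \<in> CU" "U = C.PF - C.th a"
      unfolding C.Sb_def clpup_simps by blast
    thus "openin Tx (ep -` U \<inter> topspace Tx)"
    proof cases
      case 1
      have "ep -` U \<inter> topspace Tx = {x \<in> Pt. ep x \<in> C.th a}" unfolding 1 topspace_X by blast
      thus ?thesis using ep_th[OF 1(1)] CU_open[OF 1(1)] by simp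
    next
      case 2
      have "ep -` U \<inter> topspace Tx = {x \<in> Pt. ep x \<in> C.PF - C.th a}" unfolding 2 topspace_X by blast
      moreover have "openin Tx (Pt - a)" using openin_diff[OF openin_topspace CU_closed[OF 2(1)]] topspace_X by simp
      ultimately show ?thesis using ep_cth[OF 2(1)] by simp
    qed
  next
    have "\<Union>C.Sb = C.PF" using C.topspace_PT by (simp add: C.pf_simps)
    thus "ep ` topspace Tx \<subseteq> \<Union>C.Sb" using ep_PF topspace_X by auto
  qed
  thus ?thesis by (simp add: C.pf_simps)
qed

lemma ep_closed_map: "closed_map Tx C.PT ep"
  by (meson closed_map_def closedin_compact_space compactin_imp_closedin image_compactin
      ep_cont compactX C.hausdorff_PT)

definition "gi = inv_into Pt ep"

lemma gi_ep: "x \<in> Pt \<Longrightarrow> gi (ep x) = x"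
  unfolding gi_def using inv_into_f_f[OF ep_inj] .

lemma ep_gi: assumes P: "P \<in> C.PF" shows "gi P \<in> Pt" "ep (gi P) = P"
proof -
  have "P \<in> ep ` Pt" using ep_surj P by (auto simp: C.PF_mem)
  thus "gi P \<in> Pt" "ep (gi P) = P" unfolding gi_def by (rule inv_into_into, rule f_inv_into_f)
qed

lemma gi_cont: "continuous_map C.PT Tx gi"
  unfolding continuous_map_closedin
proof (intro conjI allI impI)
  show "gi \<in> topspace C.PT \<rightarrow> topspace Tx" using ep_gi(1) C.topspace_PT topspace_X by auto
  fix K assume K: "closedin Tx K"
  have Ksub: "K \<subseteq> Pt" using closedin_subset[OF K] topspace_X by simp
  have "{P \<in> topspace C.PT. gi P \<in> K} = ep ` K"
  proof
    show "{P \<in> topspace C.PT. gi P \<in> K} \<subseteq> ep ` K"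
    proof
      fix P assume "P \<in> {P \<in> topspace C.PT. gi P \<in> K}"
      hence P: "P \<in> C.PF" "gi P \<in> K" using C.topspace_PT by auto
      thus "P \<in> ep ` K" using ep_gi(2)[OF P(1)] by (metis image_eqI)
    qed
    show "ep ` K \<subseteq> {P \<in> topspace C.PT. gi P \<in> K}"
      using Ksub gi_ep ep_PF C.topspace_PT by auto
  qed
  thus "closedin C.PT {P \<in> topspace C.PT. gi P \<in> K}" using ep_closed_map K unfolding closed_map_def by simp
qed

lemma sep_closed: assumes K: "closedin Tx K" and w: "w \<in> Pt" and nle: "\<And>z. z \<in> K \<Longrightarrow> \<not> lq z w"
  shows "\<exists>c\<in>CU. K \<subseteq> c \<and> w \<notin> c"
proof -
  have Ksub: "K \<subseteq> Pt" using closedin_subset[OF K] topspace_X by simp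
  have "\<forall>z\<in>K. \<exists>U. U \<in> CU \<and> z \<in> U \<and> w \<notin> U" using sepX w nle Ksub by blast
  then obtain Uf where Uf: "\<And>z. z \<in> K \<Longrightarrow> Uf z \<in> CU \<and> z \<in> Uf z \<and> w \<notin> Uf z" by metis
  have op: "openin Tx (Uf z)" if "z \<in> K" for z using Uf[OF that] CU_open by blast
  have mem: "z \<in> Uf z" if "z \<in> K" for z using Uf[OF that] by blast
  obtain K0 where K0: "finite K0" "K0 \<subseteq> K" "K \<subseteq> \<Union>(Uf ` K0)"
    using compactin_cover[OF closedin_compact_space[OF compactX K] op mem] by blast
  have "\<Union>(Uf ` K0) \<in> CU" using cu_fin_union[of "Uf ` K0"] K0 Uf by blast
  moreover have "w \<notin> \<Union>(Uf ` K0)" using K0 Uf by blast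
  ultimately show ?thesis using K0(3) by blast
qed

lemma ep_rel: assumes a: "a \<in> CU" and x: "x \<in> Pt" and y: "y \<in> Pt"
  shows "rel (pf (clpup X)) (C.th a) (ep x) (ep y) \<longleftrightarrow> rel X a x y"
proof -
  have ac: "a \<in> hcarrier (clpup X)" using a by (simp add: clpup_simps)
  have eq: "rel (pf (clpup X)) (C.th a) (ep x) (ep y) \<longleftrightarrow> {b \<in> CU. ccond X a b \<in> ep x} \<subseteq> ep y"
    using C.rel_pf[OF ac] ep_prime[OF x] ep_prime[OF y] by (simp add: clpup_simps)
  show ?thesis
  proof
    assume "rel (pf (clpup X)) (C.th a) (ep x) (ep y)"
    hence S: "{b \<in> CU. ccond X a b \<in> ep x} \<subseteq> ep y" using eq by blast
    show "rel X a x y"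
    proof (rule ccontr)
      assume nr: "\<not> rel X a x y"
      have nle: "\<not> lq z y" if "z \<in> {z. rel X a x z}" for z
        using rel_mono2[OF a x _ _ y] that nr by blast
      obtain c where c: "c \<in> CU" "{z. rel X a x z} \<subseteq> c" "y \<notin> c"
        using sep_closed[OF ces_rel(4)[OF a x] y nle] by blast
      have "x \<in> ccond X a c" unfolding ccond_def using x c by blast
      hence "ccond X a c \<in> ep x" using CU_ccond[OF a c(1)] by (simp add: ep_mem)
      hence "c \<in> ep y" using S c(1) by blast
      thus False using c(3) by (simp add: ep_mem)
    qed
  next
    assume r: "rel X a x y"
    have "{b \<in> CU. ccond X a b \<in> ep x} \<subseteq> ep y"
    proof
      fix b assume "b \<in> {b \<in> CU. ccond X a b \<in> ep x}"
      hence b: "b \<in> CU" "x \<in> ccond X a b" by (auto simp: ep_mem)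
      hence "y \<in> b" using r unfolding ccond_def by blast
      thus "b \<in> ep y" using b by (simp add: ep_mem)
    qed
    thus "rel (pf (clpup X)) (C.th a) (ep x) (ep y)" using eq by blast
  qed
qed

lemma CU_pf: "clopen_upsets (pf (clpup X)) = C.th ` CU"
  using C.clopen_upsets_pf by (simp add: clpup_simps)

lemma ep_morph: "ces_morph X (pf (clpup X)) ep"
  unfolding ces_morph_def C.pf_simps(1,2)
proof (intro conjI ballI impI)
  show "ep \<in> Pt \<rightarrow> C.PF" using ep_PF by blast
  show "continuous_map Tx C.PT ep" by (rule ep_cont)
  fix x assume x: "x \<in> Pt"
  {
    fix y assume y: "y \<in> Pt" and "lq x y"
    thus "ep x \<subseteq> ep y" using ep_le[OF x y] by blast
  }
  {
    fix z' assume z': "z' \<in> C.PF" and le: "ep x \<subseteq> z'"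
    obtain z where z: "z \<in> Pt" "ep z = z'" using ep_surj z' by (auto simp: C.PF_mem)
    thus "\<exists>z\<in>Pt. lq x z \<and> ep z = z'" using ep_le[OF x z(1)] le by blast
  }
next
  fix a' assume "a' \<in> clopen_upsets (pf (clpup X))"
  then obtain a where a: "a \<in> CU" "a' = C.th a" unfolding CU_pf by blast
  have pre: "{u \<in> Pt. ep u \<in> C.th a} = a" using ep_th[OF a(1)] by simp
  {
    fix x y assume x: "x \<in> Pt" and y: "y \<in> Pt" and r: "rel X {u \<in> Pt. ep u \<in> a'} x y"
    show "rel (pf (clpup X)) a' (ep x) (ep y)" using r ep_rel[OF a(1) x y] unfolding a(2) pre by blast
  }
  {
    fix x z' assume x: "x \<in> Pt" and z': "z' \<in> C.PF" and r: "rel (pf (clpup X)) a' (ep x) z'"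
    obtain w where w: "w \<in> Pt" "ep w = z'" using ep_surj z' by (auto simp: C.PF_mem)
    have "rel X a x w" using ep_rel[OF a(1) x w(1)] r w a(2) by simp
    thus "\<exists>z\<in>Pt. rel X {u \<in> Pt. ep u \<in> a'} x z \<and> ep z \<subseteq> z'" unfolding a(2) pre using w by blast
  }
qed

lemma gi_morph: "ces_morph (pf (clpup X)) X gi"
  unfolding ces_morph_def C.pf_simps(1,2)
proof (intro conjI ballI impI)
  show "gi \<in> C.PF \<rightarrow> Pt" using ep_gi(1) by blast
  show "continuous_map C.PT Tx gi" by (rule gi_cont)
  fix p assume p: "p \<in> C.PF"
  have gp: "gi p \<in> Pt" "ep (gi p) = p" using ep_gi[OF p] by blast+
  {
    fix q assume q: "q \<in> C.PF" and pq: "p \<subseteq> q"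
    have gq: "gi q \<in> Pt" "ep (gi q) = q" using ep_gi[OF q] by blast+
    show "lq (gi p) (gi q)" using ep_le[OF gp(1) gq(1)] pq gp gq by simp
  }
  {
    fix z' assume z': "z' \<in> Pt" and le: "lq (gi p) z'"
    have "p \<subseteq> ep z'" using ep_le[OF gp(1) z'] le gp by simp
    thus "\<exists>z\<in>C.PF. p \<subseteq> z \<and> gi z = z'" using ep_PF[OF z'] gi_ep[OF z'] by blast
  }
next
  fix a assume a: "a \<in> CU"
  have pre: "{u \<in> C.PF. gi u \<in> a} = C.th a"
  proof
    show "{u \<in> C.PF. gi u \<in> a} \<subseteq> C.th a"
    proof
      fix u assume "u \<in> {u \<in> C.PF. gi u \<in> a}"
      hence u: "u \<in> C.PF" "gi u \<in> a" by blast+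
      have "a \<in> ep (gi u)" using u(2) a by (simp add: ep_mem)
      hence "a \<in> u" using ep_gi(2)[OF u(1)] by simp
      thus "u \<in> C.th a" using u(1) by (simp add: C.th_mem C.PF_mem)
    qed
    show "C.th a \<subseteq> {u \<in> C.PF. gi u \<in> a}"
    proof
      fix u assume "u \<in> C.th a"
      hence u: "u \<in> C.PF" "a \<in> u" by (auto simp: C.th_mem C.PF_mem)
      have "a \<in> ep (gi u)" using u ep_gi(2)[OF u(1)] by simp
      thus "u \<in> {u \<in> C.PF. gi u \<in> a}" using u(1) by (simp add: ep_mem)
    qed
  qed
  {
    fix p q assume p: "p \<in> C.PF" and q: "q \<in> C.PF" and r: "rel (pf (clpup X)) {u \<in> C.PF. gi u \<in> a} p q"
    have gp: "gi p \<in> Pt" "ep (gi p) = p" using ep_gi[OF p] by blast+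
    have gq: "gi q \<in> Pt" "ep (gi q) = q" using ep_gi[OF q] by blast+
    show "rel X a (gi p) (gi q)" using ep_rel[OF a gp(1) gq(1)] r unfolding pre gp(2) gq(2) by blast
  }
  {
    fix p z' assume p: "p \<in> C.PF" and z': "z' \<in> Pt" and r: "rel X a (gi p) z'"
    have gp: "gi p \<in> Pt" "ep (gi p) = p" using ep_gi[OF p] by blast+
    have "rel (pf (clpup X)) (C.th a) p (ep z')" using ep_rel[OF a gp(1) z'] r gp(2) by simp
    thus "\<exists>z\<in>C.PF. rel (pf (clpup X)) {u \<in> C.PF. gi u \<in> a} p z \<and> lq (gi z) z'"
      unfolding pre using ep_PF[OF z'] gi_ep[OF z'] lq_refl[OF z'] by (intro bexI[of _ "ep z'"]) simp_all
  }
qed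

lemma ep_iso: "ces_iso X (pf (clpup X)) ep"
  unfolding ces_iso_def
proof (intro conjI exI[of _ gi])
  show "ces_morph X (pf (clpup X)) ep" by (rule ep_morph)
  show "ces_morph (pf (clpup X)) X gi" by (rule gi_morph)
  show "\<forall>x\<in>Pt. gi (ep x) = x" using gi_ep by blast
  show "\<forall>y\<in>pts (pf (clpup X)). ep (gi y) = y" using ep_gi(2) by (simp add: C.pf_simps)
qed

end


lemma CHA_I: "cha A \<Longrightarrow> CHA A"
  by (simp add: CHA_def HA_def CHA_axioms_def cha_def)

lemma CHA_homI: "cha A \<Longrightarrow> cha B \<Longrightarrow> cha_hom A B h \<Longrightarrow> CHA_hom A B h"
  by (simp add: CHA_hom_def CHA_hom_axioms_def CHA_I)

lemma CES_I: "ces X \<Longrightarrow> CES X"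
  by (simp add: CES_def)

lemma CES_morphI: "ces X \<Longrightarrow> ces Y \<Longrightarrow> ces_morph X Y f \<Longrightarrow> CES_morph X Y f"
  by (simp add: CES_morph_def CES_morph_axioms_def CES_I)

context CES_morph
begin

lemma natural_ep: assumes x: "x \<in> X.Pt" shows "pf_mor (clpup Y) pre (eps X x) = eps Y (f x)"
proof
  show "pf_mor (clpup Y) pre (eps X x) \<subseteq> eps Y (f x)"
    by (auto simp: pf_mor_def Y.clpup_simps eps_def pre_eq)
  show "eps Y (f x) \<subseteq> pf_mor (clpup Y) pre (eps X x)"
  proof
    fix a assume "a \<in> eps Y (f x)"
    hence a: "a \<in> Y.CU" "f x \<in> a" by (auto simp: eps_def)
    have "pre a \<in> X.CU" using pre_CU[OF a(1)] .
    moreover have "x \<in> pre a" using x a by (simp add: pre_eq)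
    ultimately show "a \<in> pf_mor (clpup Y) pre (eps X x)" using a by (simp add: pf_mor_def Y.clpup_simps eps_def)
  qed
qed

end

lemma item1: "\<forall>X :: 'x ces_sig. ces X \<longrightarrow> cha (clpup X)"
  using CES.cha_clpup CES_I by blast

lemma item2: "\<forall>(X :: 'x ces_sig) (Y :: 'y ces_sig) f. ces X \<and> ces Y \<and> ces_morph X Y f \<longrightarrow>
      cha_hom (clpup Y) (clpup X) (clpup_mor X f)"
  using CES_morph.pre_hom CES_morphI by blast

lemma item3: "\<forall>X :: 'x ces_sig. ces X \<longrightarrow> (\<forall>a\<in>clopen_upsets X. clpup_mor X id a = a)"
  unfolding clpup_mor_def clopen_upsets_def is_upset_def by auto

lemma item4: "\<forall>(X :: 'x ces_sig) (Y :: 'y ces_sig) (Z :: 'z ces_sig) f g.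
      ces X \<and> ces Y \<and> ces Z \<and> ces_morph X Y f \<and> ces_morph Y Z g \<longrightarrow>
      (\<forall>a\<in>clopen_upsets Z. clpup_mor X (g \<circ> f) a = clpup_mor X f (clpup_mor Y g a))"
proof (intro allI impI ballI)
  fix X :: "'x ces_sig" and Y :: "'y ces_sig" and Z :: "'z ces_sig" and f g a
  assume H: "ces X \<and> ces Y \<and> ces Z \<and> ces_morph X Y f \<and> ces_morph Y Z g"
  hence "f \<in> pts X \<rightarrow> pts Y" unfolding ces_morph_def by blast
  thus "clpup_mor X (g \<circ> f) a = clpup_mor X f (clpup_mor Y g a)" unfolding clpup_mor_def by auto
qed

lemma item5: "\<forall>A :: 'a cha_sig. cha A \<longrightarrow> ces (pf A)"
  using CHA.ces_pf CHA_I by blast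

lemma item6: "\<forall>(A :: 'a cha_sig) (B :: 'b cha_sig) h. cha A \<and> cha B \<and> cha_hom A B h \<longrightarrow>
      ces_morph (pf B) (pf A) (pf_mor A h)"
  using CHA_hom.pfm_morph CHA_homI by blast

lemma item7: "\<forall>A :: 'a cha_sig. cha A \<longrightarrow> (\<forall>p\<in>pts (pf A). pf_mor A id p = p)"
  unfolding pf_mor_def pf_def prime_filter_def by auto

lemma item8: "\<forall>(A :: 'a cha_sig) (B :: 'b cha_sig) (C :: 'c cha_sig) h k.
      cha A \<and> cha B \<and> cha C \<and> cha_hom A B h \<and> cha_hom B C k \<longrightarrow>
      (\<forall>p\<in>pts (pf C). pf_mor A (k \<circ> h) p = pf_mor A h (pf_mor B k p))"
proof (intro allI impI ballI)
  fix A :: "'a cha_sig" and B :: "'b cha_sig" and C :: "'c cha_sig" and h k p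
  assume H: "cha A \<and> cha B \<and> cha C \<and> cha_hom A B h \<and> cha_hom B C k"
  hence "h \<in> hcarrier A \<rightarrow> hcarrier B" unfolding cha_hom_def by blast
  thus "pf_mor A (k \<circ> h) p = pf_mor A h (pf_mor B k p)" unfolding pf_mor_def by auto
qed

lemma item9: "\<forall>A :: 'a cha_sig. cha A \<longrightarrow> cha_iso A (clpup (pf A)) (theta A)"
  using CHA.th_iso CHA_I by blast

lemma item10: "\<forall>(A :: 'a cha_sig) (B :: 'b cha_sig) h. cha A \<and> cha B \<and> cha_hom A B h \<longrightarrow>
      (\<forall>a\<in>hcarrier A. clpup_mor (pf B) (pf_mor A h) (theta A a) = theta B (h a))"
proof (intro allI impI ballI)
  fix A :: "'a cha_sig" and B :: "'b cha_sig" and h a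
  assume H: "cha A \<and> cha B \<and> cha_hom A B h" and a: "a \<in> hcarrier A"
  have "CHA_hom A B h" using H CHA_homI by blast
  thus "clpup_mor (pf B) (pf_mor A h) (theta A a) = theta B (h a)" by (rule CHA_hom.natural_th[OF _ a])
qed

lemma item11: "\<forall>X :: 'x ces_sig. ces X \<longrightarrow> ces_iso X (pf (clpup X)) (eps X)"
  using CES.ep_iso CES_I by blast

lemma item12: "\<forall>(X :: 'x ces_sig) (Y :: 'y ces_sig) f. ces X \<and> ces Y \<and> ces_morph X Y f \<longrightarrow>
      (\<forall>x\<in>pts X. pf_mor (clpup Y) (clpup_mor X f) (eps X x) = eps Y (f x))"
proof (intro allI impI ballI)
  fix X :: "'x ces_sig" and Y :: "'y ces_sig" and f x
  assume H: "ces X \<and> ces Y \<and> ces_morph X Y f" and x: "x \<in> pts X"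
  have "CES_morph X Y f" using H CES_morphI by blast
  thus "pf_mor (clpup Y) (clpup_mor X f) (eps X x) = eps Y (f x)" by (rule CES_morph.natural_ep[OF _ x])
qed

theorem theorem4p23:
  shows
  "\<comment> \<open>ClpUp is a contravariant functor CES -> CHA\<close>
   (\<forall>X :: 'x ces_sig. ces X \<longrightarrow> cha (clpup X)) \<and>
   (\<forall>(X :: 'x ces_sig) (Y :: 'y ces_sig) f. ces X \<and> ces Y \<and> ces_morph X Y f \<longrightarrow>
      cha_hom (clpup Y) (clpup X) (clpup_mor X f)) \<and>
   (\<forall>X :: 'x ces_sig. ces X \<longrightarrow> (\<forall>a\<in>clopen_upsets X. clpup_mor X id a = a)) \<and>
   (\<forall>(X :: 'x ces_sig) (Y :: 'y ces_sig) (Z :: 'z ces_sig) f g.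
      ces X \<and> ces Y \<and> ces Z \<and> ces_morph X Y f \<and> ces_morph Y Z g \<longrightarrow>
      (\<forall>a\<in>clopen_upsets Z. clpup_mor X (g \<circ> f) a = clpup_mor X f (clpup_mor Y g a))) \<and>
   \<comment> \<open>Pf is a contravariant functor CHA -> CES\<close>
   (\<forall>A :: 'a cha_sig. cha A \<longrightarrow> ces (pf A)) \<and>
   (\<forall>(A :: 'a cha_sig) (B :: 'b cha_sig) h. cha A \<and> cha B \<and> cha_hom A B h \<longrightarrow>
      ces_morph (pf B) (pf A) (pf_mor A h)) \<and>
   (\<forall>A :: 'a cha_sig. cha A \<longrightarrow> (\<forall>p\<in>pts (pf A). pf_mor A id p = p)) \<and>
   (\<forall>(A :: 'a cha_sig) (B :: 'b cha_sig) (C :: 'c cha_sig) h k.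
      cha A \<and> cha B \<and> cha C \<and> cha_hom A B h \<and> cha_hom B C k \<longrightarrow>
      (\<forall>p\<in>pts (pf C). pf_mor A (k \<circ> h) p = pf_mor A h (pf_mor B k p))) \<and>
   \<comment> \<open>natural isomorphism Id_CHA = ClpUp o Pf\<close>
   (\<forall>A :: 'a cha_sig. cha A \<longrightarrow> cha_iso A (clpup (pf A)) (theta A)) \<and>
   (\<forall>(A :: 'a cha_sig) (B :: 'b cha_sig) h. cha A \<and> cha B \<and> cha_hom A B h \<longrightarrow>
      (\<forall>a\<in>hcarrier A. clpup_mor (pf B) (pf_mor A h) (theta A a) = theta B (h a))) \<and>
   \<comment> \<open>natural isomorphism Id_CES = Pf o ClpUp\<close>
   (\<forall>X :: 'x ces_sig. ces X \<longrightarrow> ces_iso X (pf (clpup X)) (eps X)) \<and>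
   (\<forall>(X :: 'x ces_sig) (Y :: 'y ces_sig) f. ces X \<and> ces Y \<and> ces_morph X Y f \<longrightarrow>
      (\<forall>x\<in>pts X. pf_mor (clpup Y) (clpup_mor X f) (eps X x) = eps Y (f x)))"
  using item1 item2 item3 item4 item5 item6 item7 item8 item9 item10 item11 item12
  by (intro conjI) assumption+

end
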